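(* There is an absolute constant $c>0$ such that for every $n$, every $\epsilon\in(0,1)$ and every symmetric PSD $A\in\mathbb{R}^{n\times n}$ with $\max_{i,j}|A_{ij}|\le 1$, Algorithm E run with $p=\min(1, \frac{c}{\epsilon n})$ returns, with probability at least $3/4$, a unit vector $u\in\mathbb{R}^n$ with $u^TAu \ge \lambda_1(A) - \epsilon n$, where $\lambda_1(A)$ is the largest eigenvalue of $A$.
   Context: Algorithm E: include each column index $i\in[n]$ independently with probability $p$; let $S\in\mathbb{R}^{n\times m}$ be the matrix whose columns are the standard basis vectors $e_i$ of the included indices. Query the columns $AS$ of $A$, and from $AS$ and $S$ compute $S^TAS$ and $S^TA^2S=(AS)^T(AS)$. If $S^TAS = 0$, return an arbitrary unit vector. Otherwise find $x\in\mathbb{R}^m$ with $x^TS^TASx>0$ maximizing $\frac{x^TS^TA^2Sx}{x^TS^TASx}$, and return $u = \frac{ASx}{\|ASx\|_2}$. *)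

theory Defs
  imports "Jordan_Normal_Form.Char_Poly" "HOL-Probability.Product_PMF"
begin

definition sample_set :: "nat \<Rightarrow> real \<Rightarrow> nat set pmf" where
  "sample_set n p = map_pmf (\<lambda>f. {i. i < n \<and> f i}) (Pi_pmf {..<n} False (\<lambda>_. bernoulli_pmf p))"

definition sel_mat :: "nat \<Rightarrow> nat set \<Rightarrow> real Matrix.mat" where
  "sel_mat n T = Matrix.mat n (card T) (\<lambda>(i, k). if i = sorted_list_of_set T ! k then 1 else 0)"

definition vnorm :: "real Matrix.vec \<Rightarrow> real" where
  "vnorm v = sqrt (scalar_prod v v)"

text \<open>All possible outputs of Algorithm E on the sample T (any maximiser, any
  arbitrary unit vector in the degenerate case).\<close>
definition algE_outputs :: "real Matrix.mat \<Rightarrow> nat set \<Rightarrow> real Matrix.vec set" where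
  "algE_outputs A T =
    (let n = dim_row A; m = card T; S = sel_mat n T; AS = A * S;
         B = transpose_mat S * A * S; C = transpose_mat AS * AS
     in if B = 0\<^sub>m m m then {u. u \<in> carrier_vec n \<and> vnorm u = 1}
        else {(1 / vnorm (AS *\<^sub>v x)) \<cdot>\<^sub>v (AS *\<^sub>v x) | x.
                x \<in> carrier_vec m \<and> scalar_prod x (B *\<^sub>v x) > 0 \<and>
                (\<forall>y \<in> carrier_vec m. scalar_prod y (B *\<^sub>v y) > 0 \<longrightarrow>
                    (scalar_prod y (C *\<^sub>v y)) / (scalar_prod y (B *\<^sub>v y)) \<le> (scalar_prod x (C *\<^sub>v x)) / (scalar_prod x (B *\<^sub>v x)))})"

definition psd_mat :: "real Matrix.mat \<Rightarrow> bool" where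
  "psd_mat A = (\<forall>x \<in> carrier_vec (dim_row A). scalar_prod x (A *\<^sub>v x) \<ge> 0)"

definition lambda1 :: "real Matrix.mat \<Rightarrow> real" where
  "lambda1 A = Max {k. eigenvalue A k}"

end

theory Submission imports Defs begin

definition bil :: "nat \<Rightarrow> (nat \<Rightarrow> nat \<Rightarrow> real) \<Rightarrow> (nat \<Rightarrow> real) \<Rightarrow> (nat \<Rightarrow> real) \<Rightarrow> real" where
  "bil n a x y = (\<Sum>i<n. \<Sum>j<n. x i * a i j * y j)"

definition mv :: "nat \<Rightarrow> (nat \<Rightarrow> nat \<Rightarrow> real) \<Rightarrow> (nat \<Rightarrow> real) \<Rightarrow> nat \<Rightarrow> real" where
  "mv n a x i = (\<Sum>j<n. a i j * x j)"

definition symm :: "nat \<Rightarrow> (nat \<Rightarrow> nat \<Rightarrow> real) \<Rightarrow> bool" where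
  "symm n a = (\<forall>i<n. \<forall>j<n. a i j = a j i)"

definition psd :: "nat \<Rightarrow> (nat \<Rightarrow> nat \<Rightarrow> real) \<Rightarrow> bool" where
  "psd n a = (\<forall>x. 0 \<le> bil n a x x)"

lemma bil_mv: "bil n a x y = (\<Sum>i<n. x i * mv n a y i)"
  unfolding bil_def mv_def by (simp add: sum_distrib_left mult.assoc)

lemma bil_sym: "symm n a \<Longrightarrow> bil n a x y = bil n a y x"
  unfolding bil_def symm_def
  by (subst sum.swap) (auto intro!: sum.cong simp: mult.commute mult.left_commute)

lemma quad_disc:
  fixes \<alpha> \<beta> \<gamma> :: real
  assumes "\<And>t. 0 \<le> \<alpha> * t\<^sup>2 + 2 * \<beta> * t + \<gamma>"
  shows "\<beta>\<^sup>2 \<le> \<alpha> * \<gamma>"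
proof (cases "\<alpha> = 0")
  case True
  show ?thesis
  proof (rule ccontr)
    assume "\<not> ?thesis"
    hence b: "\<beta> \<noteq> 0" using True by auto
    have "0 \<le> 2 * \<beta> * (- (\<bar>\<gamma>\<bar> + 1) / (2 * \<beta>)) + \<gamma>" using assms[of "- (\<bar>\<gamma>\<bar> + 1) / (2 * \<beta>)"] True by simp
    also have "\<dots> = - (\<bar>\<gamma>\<bar> + 1) + \<gamma>" using b by (simp add: field_simps)
    finally show False by simp
  qed
next
  case False
  have a0: "\<alpha> \<ge> 0"
  proof (rule ccontr)
    assume "\<not> \<alpha> \<ge> 0"
    hence a: "\<alpha> < 0" by simp
    define K where "K = 2 * \<bar>\<beta>\<bar> + \<bar>\<gamma>\<bar> + 1"
    define t where "t = max 1 (K / (- \<alpha>))"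
    have t1: "t \<ge> 1" unfolding t_def by simp
    have "K / (- \<alpha>) \<le> t" unfolding t_def by simp
    hence "K \<le> - \<alpha> * t" using a by (simp add: field_simps)
    hence "\<alpha> * t * t \<le> - K * t" using t1 by (intro mult_right_mono) auto
    hence "\<alpha> * t\<^sup>2 + 2 * \<beta> * t + \<gamma> \<le> - K * t + 2 * \<bar>\<beta>\<bar> * t + \<gamma>"
    proof -
      have "2 * \<beta> * t \<le> 2 * \<bar>\<beta>\<bar> * t" using t1 by (intro mult_right_mono) auto
      thus ?thesis using \<open>\<alpha> * t * t \<le> - K * t\<close> by (simp add: power2_eq_square)
    qed
    also have "\<dots> = - (\<bar>\<gamma>\<bar> + 1) * t + \<gamma>" unfolding K_def by (simp add: algebra_simps)
    also have "\<dots> \<le> - (\<bar>\<gamma>\<bar> + 1) + \<gamma>"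
    proof -
      have "(\<bar>\<gamma>\<bar> + 1) * 1 \<le> (\<bar>\<gamma>\<bar> + 1) * t" using t1 by (intro mult_left_mono) auto
      thus ?thesis by (simp add: algebra_simps)
    qed
    also have "\<dots> < 0" by simp
    finally show False using assms[of t] by simp
  qed
  hence a: "\<alpha> > 0" using False by simp
  have "0 \<le> \<alpha> * (- \<beta> / \<alpha>)\<^sup>2 + 2 * \<beta> * (- \<beta> / \<alpha>) + \<gamma>" by (rule assms)
  also have "\<dots> = \<gamma> - \<beta>\<^sup>2 / \<alpha>" using a by (simp add: power2_eq_square field_simps)
  finally have "\<beta>\<^sup>2 / \<alpha> \<le> \<gamma>" by simp
  thus ?thesis using a by (simp add: field_simps)
qed

lemma bil_expand:
  assumes "symm n a"
  shows "bil n a (\<lambda>i. x i + t * y i) (\<lambda>i. x i + t * y i) = bil n a y y * t\<^sup>2 + 2 * bil n a x y * t + bil n a x x"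
proof -
  have "bil n a (\<lambda>i. x i + t * y i) (\<lambda>i. x i + t * y i) = bil n a x x + t * bil n a x y + t * bil n a y x + t\<^sup>2 * bil n a y y"
    unfolding bil_def by (simp add: algebra_simps sum.distrib sum_distrib_left power2_eq_square)
  thus ?thesis using bil_sym[OF assms, of x y] by (simp add: algebra_simps)
qed

lemma psd_cs:
  assumes "symm n a" "psd n a"
  shows "(bil n a x y)\<^sup>2 \<le> bil n a x x * bil n a y y"
proof -
  have "(bil n a x y)\<^sup>2 \<le> bil n a y y * bil n a x x"
    by (rule quad_disc) (use assms in \<open>auto simp: psd_def bil_expand[symmetric]\<close>)
  thus ?thesis by (simp add: mult.commute)
qed

definition ev :: "nat \<Rightarrow> nat \<Rightarrow> real" where "ev i = (\<lambda>j. if j = i then 1 else 0)"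

lemma ev_mult: "ev i k * z = (if k = i then z else 0)" by (simp add: ev_def)
lemma ev_mult': "z * ev i k = (if k = i then z else 0)" by (simp add: ev_def)
lemma if_mult0: "(if P then z else 0) * (w::real) = (if P then z * w else 0)" by simp

lemma bil_ev_left: "i < n \<Longrightarrow> bil n a (ev i) y = mv n a y i"
  by (simp add: bil_mv ev_mult sum.delta')

lemma bil_ev_ev: "i < n \<Longrightarrow> bil n a (ev i) (ev i) = a i i"
  unfolding bil_def by (simp add: ev_mult ev_mult' if_mult0 sum.delta' mult.assoc cong: if_cong)

lemma bil_mv_swap:
  assumes "symm n a"
  shows "bil n a x (mv n a x) = (\<Sum>i<n. (mv n a x i)\<^sup>2)"
proof -
  have "bil n a x (mv n a x) = bil n a (mv n a x) x" by (rule bil_sym[OF assms])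
  also have "\<dots> = (\<Sum>i<n. mv n a x i * mv n a x i)" by (simp add: bil_mv)
  finally show ?thesis by (simp add: power2_eq_square)
qed

lemma psd_diag: "psd n a \<Longrightarrow> i < n \<Longrightarrow> 0 \<le> a i i"
  using bil_ev_ev[of i n a] unfolding psd_def by metis

lemma mv_sq_trace:
  assumes "symm n a" "psd n a"
  shows "(\<Sum>i<n. (mv n a x i)\<^sup>2) \<le> (\<Sum>i<n. a i i) * bil n a x x"
proof -
  have "(\<Sum>i<n. (mv n a x i)\<^sup>2) \<le> (\<Sum>i<n. a i i * bil n a x x)"
  proof (rule sum_mono)
    fix i assume i: "i \<in> {..<n}"
    have "(bil n a (ev i) x)\<^sup>2 \<le> bil n a (ev i) (ev i) * bil n a x x" by (rule psd_cs[OF assms])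
    moreover have "bil n a (ev i) x = mv n a x i" "bil n a (ev i) (ev i) = a i i"
      using i bil_ev_left[of i n a x] bil_ev_ev[of i n a] by auto
    ultimately show "(mv n a x i)\<^sup>2 \<le> a i i * bil n a x x" by simp
  qed
  thus ?thesis by (simp add: sum_distrib_right)
qed

lemma mv_sq_lambda:
  assumes "symm n a" "psd n a" and lam: "\<And>x. bil n a x x \<le> l * (\<Sum>i<n. (x i)\<^sup>2)"
  shows "(\<Sum>i<n. (mv n a x i)\<^sup>2) \<le> l * bil n a x x"
proof -
  define w where "w = mv n a x"
  define s where "s = (\<Sum>i<n. (w i)\<^sup>2)"
  have "s\<^sup>2 = (bil n a x w)\<^sup>2" unfolding s_def w_def by (simp add: bil_mv_swap[OF assms(1)])
  also have "\<dots> \<le> bil n a x x * bil n a w w" by (rule psd_cs[OF assms(1,2)])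
  also have "\<dots> \<le> bil n a x x * (l * s)"
    unfolding s_def using lam[of w] assms(2) unfolding psd_def by (intro mult_left_mono) auto
  finally have *: "s * s \<le> (l * bil n a x x) * s" by (simp add: power2_eq_square algebra_simps)
  have "s \<ge> 0" unfolding s_def by (intro sum_nonneg) auto
  show ?thesis
  proof (cases "s = 0")
    case True
    have "0 \<le> bil n a x x" using assms(2) unfolding psd_def by auto
    moreover have "l * bil n a x x \<ge> 0"
    proof -
      have "bil n a x x \<le> l * (\<Sum>i<n. (x i)\<^sup>2)" by (rule lam)
      show ?thesis
      proof (cases "bil n a x x = 0")
        case False
        hence bpos: "bil n a x x > 0" using \<open>0 \<le> bil n a x x\<close> by simp
        have "(\<Sum>i<n. (x i)\<^sup>2) \<ge> 0" by (intro sum_nonneg) auto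
        hence "l \<ge> 0" using lam[of x] bpos by (smt (verit) mult_nonpos_nonneg)
        thus ?thesis using bpos by simp
      qed simp
    qed
    ultimately show ?thesis using True unfolding s_def w_def by simp
  next
    case False
    hence "s > 0" using \<open>s \<ge> 0\<close> by simp
    thus ?thesis using * unfolding s_def w_def by (simp add: mult_le_cancel_right)
  qed
qed

definition am :: "real mat \<Rightarrow> nat \<Rightarrow> nat \<Rightarrow> real" where "am A i j = A $$ (i, j)"

lemma bil_cong: "(\<And>i. i < n \<Longrightarrow> x i = x' i) \<Longrightarrow> (\<And>i. i < n \<Longrightarrow> y i = y' i) \<Longrightarrow> bil n a x y = bil n a x' y'"
  unfolding bil_def by (intro sum.cong) auto

lemma mv_cong: "(\<And>i. i < n \<Longrightarrow> x i = x' i) \<Longrightarrow> mv n a x j = mv n a x' j"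
  unfolding mv_def by (intro sum.cong) auto

lemma mult_vec_idx:
  assumes "A \<in> carrier_mat n n" "x \<in> carrier_vec n" "i < n"
  shows "(A *\<^sub>v x) $ i = mv n (am A) (($) x) i"
  using assms unfolding mv_def am_def
  by (auto simp: mult_mat_vec_def scalar_prod_def atLeast0LessThan intro!: sum.cong)

lemma sp_sum: "w \<in> carrier_vec n \<Longrightarrow> scalar_prod x w = (\<Sum>i<n. x $ i * w $ i)"
  by (auto simp: scalar_prod_def atLeast0LessThan)

lemma sp_bil:
  assumes "A \<in> carrier_mat n n" "x \<in> carrier_vec n" "w \<in> carrier_vec n"
  shows "scalar_prod x (A *\<^sub>v w) = bil n (am A) (($) x) (($) w)"
  using assms by (simp add: sp_sum[of _ n] bil_mv mv_def am_def)

lemma symm_of: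
  assumes "A \<in> carrier_mat n n" "transpose_mat A = A"
  shows "symm n (am A)"
  unfolding symm_def am_def
proof (intro allI impI)
  fix i j assume "i < n" "j < n"
  hence "transpose_mat A $$ (j, i) = A $$ (i, j)" using assms(1) by auto
  thus "A $$ (i, j) = A $$ (j, i)" using assms(2) by simp
qed

lemma psd_of:
  assumes "A \<in> carrier_mat n n" "psd_mat A"
  shows "psd n (am A)"
  unfolding psd_def
proof
  fix x :: "nat \<Rightarrow> real"
  have v: "Matrix.vec n x \<in> carrier_vec n" by simp
  have "bil n (am A) x x = bil n (am A) (($) (Matrix.vec n x)) (($) (Matrix.vec n x))"
    by (rule bil_cong) auto
  also have "\<dots> = scalar_prod (Matrix.vec n x) (A *\<^sub>v Matrix.vec n x)" using sp_bil[OF assms(1) v v] by simp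
  also have "\<dots> \<ge> 0" using assms unfolding psd_mat_def by auto
  finally show "0 \<le> bil n (am A) x x" .
qed

lemma bil_zero: "(\<And>i. i < n \<Longrightarrow> x i = 0) \<Longrightarrow> bil n a x x = 0"
  unfolding bil_def by (auto intro!: sum.neutral)

lemma bil_scale: "bil n a (\<lambda>i. c * x i) (\<lambda>i. c * x i) = c\<^sup>2 * bil n a x x"
  unfolding bil_def by (simp add: sum_distrib_left power2_eq_square algebra_simps)

lemma sum_sq_ev0: assumes "0 < n" shows "(\<Sum>i<n. (ev 0 i)\<^sup>2) = 1"
proof -
  have "(\<Sum>i<n. (ev 0 i)\<^sup>2) = (\<Sum>i<n. if i = 0 then 1 else 0)" by (intro sum.cong) (auto simp: ev_def)
  thus ?thesis using assms by simp
qed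

lemma bil_shift:
  "bil n (\<lambda>i j. c * (if i = j then 1 else 0) - a i j) x x = c * (\<Sum>i<n. (x i)\<^sup>2) - bil n a x x"
proof -
  have inner: "(\<Sum>j<n. x i * (c * (if i = j then 1 else 0) - a i j) * x j) = c * (x i)\<^sup>2 - (\<Sum>j<n. x i * a i j * x j)"
    if "i < n" for i
  proof -
    have "(\<Sum>j<n. x i * (c * (if i = j then 1 else 0) - a i j) * x j) =
          (\<Sum>j<n. (if j = i then c * x i * x j else 0) - x i * a i j * x j)"
      by (intro sum.cong) (auto simp: algebra_simps)
    also have "\<dots> = c * (x i)\<^sup>2 - (\<Sum>j<n. x i * a i j * x j)"
      using that by (simp add: sum_subtractf power2_eq_square)
    finally show ?thesis .
  qed
  have "bil n (\<lambda>i j. c * (if i = j then 1 else 0) - a i j) x x = (\<Sum>i<n. c * (x i)\<^sup>2 - (\<Sum>j<n. x i * a i j * x j))"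
    unfolding bil_def by (intro sum.cong) (auto simp: inner)
  also have "\<dots> = c * (\<Sum>i<n. (x i)\<^sup>2) - bil n a x x"
    by (simp add: sum_subtractf sum_distrib_left bil_def)
  finally show ?thesis .
qed

lemma symm_shift: "symm n a \<Longrightarrow> symm n (\<lambda>i j. c * (if i = j then 1 else 0) - a i j)"
  unfolding symm_def by auto

lemma spectral:
  assumes A: "A \<in> carrier_mat n n" and sy: "transpose_mat A = A" and n: "n > 0"
  shows "eigenvalue A (lambda1 A) \<and> (\<forall>x. bil n (am A) x x \<le> lambda1 A * (\<Sum>i<n. (x i)\<^sup>2))"
proof -
  define a where "a = am A"
  have sa: "symm n a" unfolding a_def by (rule symm_of[OF A sy])
  define S where "S = {bil n a x x | x. (\<Sum>i<n. (x i)\<^sup>2) = 1}"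
  define K where "K = (\<Sum>i<n. \<Sum>j<n. \<bar>a i j\<bar>)"
  have Sne: "bil n a (ev 0) (ev 0) \<in> S" unfolding S_def using sum_sq_ev0[OF n] by auto
  have Sbd: "y \<le> K" if "y \<in> S" for y
  proof -
    from that obtain x where x: "(\<Sum>i<n. (x i)\<^sup>2) = 1" and y: "y = bil n a x x" unfolding S_def by auto
    have xi: "\<bar>x i\<bar> \<le> 1" if "i < n" for i
    proof -
      have "(x i)\<^sup>2 \<le> (\<Sum>i<n. (x i)\<^sup>2)" using that by (intro member_le_sum) auto
      hence "(x i)\<^sup>2 \<le> 1\<^sup>2" using x by simp
      thus ?thesis by (simp add: abs_square_le_1)
    qed
    have "y \<le> (\<Sum>i<n. \<Sum>j<n. \<bar>x i * a i j * x j\<bar>)" unfolding y bil_def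
      by (intro sum_mono) (auto intro: order.trans[OF _ sum_mono] abs_ge_self)
    also have "\<dots> \<le> K" unfolding K_def
    proof (intro sum_mono)
      fix i j assume "i \<in> {..<n}" "j \<in> {..<n}"
      hence "\<bar>x i\<bar> * \<bar>x j\<bar> \<le> 1 * 1" using xi by (intro mult_mono) auto
      hence "\<bar>x i\<bar> * \<bar>x j\<bar> * \<bar>a i j\<bar> \<le> 1 * \<bar>a i j\<bar>" by (intro mult_right_mono) auto
      thus "\<bar>x i * a i j * x j\<bar> \<le> \<bar>a i j\<bar>" by (simp add: abs_mult algebra_simps)
    qed
    finally show ?thesis .
  qed
  have bdd: "bdd_above S" using Sbd by (auto simp: bdd_above_def)
  define \<mu> where "\<mu> = Sup S"
  have upper: "bil n a x x \<le> \<mu> * (\<Sum>i<n. (x i)\<^sup>2)" for x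
  proof -
    define s where "s = (\<Sum>i<n. (x i)\<^sup>2)"
    have s0: "s \<ge> 0" unfolding s_def by (intro sum_nonneg) auto
    show ?thesis
    proof (cases "s = 0")
      case True
      hence "\<forall>i\<in>{..<n}. (x i)\<^sup>2 = 0" unfolding s_def by (subst sum_nonneg_eq_0_iff[symmetric]) auto
      hence "bil n a x x = 0" by (intro bil_zero) auto
      thus ?thesis using True unfolding s_def by simp
    next
      case False
      hence sp: "s > 0" using s0 by simp
      define y where "y = (\<lambda>i. (1 / sqrt s) * x i)"
      have "(\<Sum>i<n. (y i)\<^sup>2) = (\<Sum>i<n. (x i)\<^sup>2) / s" unfolding y_def using sp
        by (simp add: power_mult_distrib sum_divide_distrib[symmetric] power_divide)
      hence "(\<Sum>i<n. (y i)\<^sup>2) = 1" using sp unfolding s_def by simp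
      hence "bil n a y y \<in> S" unfolding S_def by auto
      hence "bil n a y y \<le> \<mu>" unfolding \<mu>_def using bdd by (rule cSup_upper)
      moreover have "bil n a y y = bil n a x x / s" unfolding y_def bil_scale using sp
        by (simp add: power_divide)
      ultimately show ?thesis using sp unfolding s_def by (simp add: field_simps)
    qed
  qed
  have eig: "eigenvalue A \<mu>"
  proof (rule ccontr)
    assume ne: "\<not> eigenvalue A \<mu>"
    define N where "N = char_matrix A \<mu>"
    have N: "N \<in> carrier_mat n n" unfolding N_def using A by simp
    have "Determinant.det N \<noteq> 0" using ne unfolding N_def eigenvalue_det[OF A] by simp
    from det_non_zero_imp_unit[OF N this, of "()"]
    obtain N' where N': "N' \<in> carrier_mat n n" "N' * N = 1\<^sub>m n"
      unfolding Units_def by (auto simp: ring_mat_simps)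
    define b where "b = (\<lambda>i j. \<mu> * (if i = j then 1 else 0) - a i j)"
    have sb: "symm n b" unfolding b_def by (rule symm_shift[OF sa])
    have bil_b: "bil n b x x = \<mu> * (\<Sum>i<n. (x i)\<^sup>2) - bil n a x x" for x
      unfolding b_def by (rule bil_shift)
    have pb: "psd n b" unfolding psd_def bil_b using upper by auto
    define K2 where "K2 = (\<Sum>i<n. \<Sum>j<n. (N' $$ (i, j))\<^sup>2)"
    define trb where "trb = (\<Sum>i<n. b i i)"
    have K2: "K2 \<ge> 0" unfolding K2_def by (intro sum_nonneg) auto
    have trb: "trb \<ge> 0" unfolding trb_def using psd_diag[OF pb] by (intro sum_nonneg) auto
    have key: "(\<Sum>i<n. (x i)\<^sup>2) \<le> K2 * trb * bil n b x x" for x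
    proof -
      define xv where "xv = Matrix.vec n x"
      have xv: "xv \<in> carrier_vec n" unfolding xv_def by simp
      define w where "w = N *\<^sub>v xv"
      have w: "w \<in> carrier_vec n" unfolding w_def using N xv by simp
      have wi: "w $ j = - mv n b x j" if "j < n" for j
      proof -
        have "w $ j = mv n (am N) (($) xv) j" unfolding w_def by (rule mult_vec_idx[OF N xv that])
        also have "\<dots> = (\<Sum>i<n. (A $$ (j, i) - (if j = i then \<mu> else 0)) * x i)"
          unfolding mv_def am_def N_def char_matrix_def xv_def using A that by (intro sum.cong) auto
        also have "\<dots> = (\<Sum>i<n. - ((\<mu> * (if j = i then 1 else 0) - a j i) * x i))"
          unfolding a_def am_def by (intro sum.cong) (auto simp: algebra_simps)
        also have "\<dots> = - mv n b x j" unfolding mv_def b_def by (simp only: sum_negf)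
        finally show ?thesis .
      qed
      have "xv = N' *\<^sub>v w" unfolding w_def using N N' xv
        by (simp add: assoc_mult_mat_vec[symmetric])
      hence xi: "x i = (\<Sum>j<n. N' $$ (i, j) * w $ j)" if "i < n" for i
      proof -
        have "x i = xv $ i" unfolding xv_def using that by simp
        also have "\<dots> = mv n (am N') (($) w) i" unfolding \<open>xv = N' *\<^sub>v w\<close> by (rule mult_vec_idx[OF N'(1) w that])
        finally show ?thesis unfolding mv_def am_def .
      qed
      have "(x i)\<^sup>2 \<le> (\<Sum>j<n. (N' $$ (i, j))\<^sup>2) * (\<Sum>j<n. (w $ j)\<^sup>2)" if "i < n" for i
        unfolding xi[OF that] by (rule Cauchy_Schwarz_ineq_sum)
      hence "(\<Sum>i<n. (x i)\<^sup>2) \<le> (\<Sum>i<n. (\<Sum>j<n. (N' $$ (i, j))\<^sup>2) * (\<Sum>j<n. (w $ j)\<^sup>2))"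
        by (intro sum_mono) auto
      also have "\<dots> = K2 * (\<Sum>j<n. (w $ j)\<^sup>2)" unfolding K2_def by (simp add: sum_distrib_right)
      also have "(\<Sum>j<n. (w $ j)\<^sup>2) = (\<Sum>j<n. (mv n b x j)\<^sup>2)" by (intro sum.cong) (auto simp: wi)
      also have "\<dots> \<le> trb * bil n b x x" unfolding trb_def by (rule mv_sq_trace[OF sb pb])
      finally show ?thesis using K2 by (simp add: mult.assoc mult_left_mono order_trans)
    qed
    define D where "D = K2 * trb"
    have D0: "D \<ge> 0" unfolding D_def using K2 trb by simp
    have unitb: "1 \<le> D * (\<mu> - bil n a x x)" if "(\<Sum>i<n. (x i)\<^sup>2) = 1" for x
      using key[of x] that unfolding bil_b D_def by simp
    have "D \<noteq> 0" using unitb[OF sum_sq_ev0[OF n]] by auto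
    hence Dp: "D > 0" using D0 by simp
    have "y \<le> \<mu> - 1 / D" if "y \<in> S" for y
    proof -
      from that obtain x where x: "(\<Sum>i<n. (x i)\<^sup>2) = 1" and y: "y = bil n a x x" unfolding S_def by auto
      have "1 \<le> D * (\<mu> - y)" using unitb[OF x] y by simp
      hence "1 / D \<le> \<mu> - y" using Dp by (simp add: field_simps)
      thus ?thesis by simp
    qed
    hence "\<mu> \<le> \<mu> - 1 / D" unfolding \<mu>_def using Sne by (intro cSup_least) auto
    thus False using Dp by simp
  qed
  have fin: "finite {k. eigenvalue A k}"
  proof -
    have "char_poly A \<noteq> 0" using degree_monic_char_poly[OF A] by auto
    hence "finite {k. poly (char_poly A) k = 0}" by (rule poly_roots_finite)
    thus ?thesis using eigenvalue_root_char_poly[OF A] by simp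
  qed
  have le: "k \<le> \<mu>" if "eigenvalue A k" for k
  proof -
    from that obtain w where w: "w \<in> carrier_vec n" "w \<noteq> 0\<^sub>v n" "A *\<^sub>v w = k \<cdot>\<^sub>v w"
      unfolding eigenvalue_def eigenvector_def using A by auto
    define s where "s = (\<Sum>i<n. (w $ i)\<^sup>2)"
    have "s \<noteq> 0"
    proof
      assume "s = 0"
      hence "\<forall>i\<in>{..<n}. (w $ i)\<^sup>2 = 0" unfolding s_def by (subst sum_nonneg_eq_0_iff[symmetric]) auto
      hence "w = 0\<^sub>v n" using w(1) by (intro eq_vecI) auto
      thus False using w(2) by simp
    qed
    moreover have "s \<ge> 0" unfolding s_def by (intro sum_nonneg) auto
    ultimately have sp: "s > 0" by simp
    have "bil n a (($) w) (($) w) = scalar_prod w (A *\<^sub>v w)" unfolding a_def using sp_bil[OF A w(1) w(1)] by simp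
    also have "\<dots> = k * s" using w(1) unfolding w(3) s_def
      by (simp add: sp_sum[of _ n] power2_eq_square sum_distrib_left algebra_simps)
    finally have "k * s \<le> \<mu> * s" using upper[of "($) w"] unfolding s_def by simp
    thus ?thesis using sp by simp
  qed
  have "lambda1 A = \<mu>" unfolding lambda1_def using fin le eig by (intro Max_eqI) auto
  thus ?thesis using eig upper unfolding a_def by simp
qed

lemma sum_nth_distinct:
  assumes "distinct xs"
  shows "(\<Sum>k<length xs. f (xs ! k)) = sum f (set xs)"
proof -
  have "(\<Sum>k<length xs. f (xs ! k)) = sum_list (map f xs)"
    by (simp add: sum_list_sum_nth atLeast0LessThan)
  also have "\<dots> = sum f (set xs)" using assms by (simp add: sum_list_distinct_conv_sum_set)
  finally show ?thesis .
qed

lemma sel_mat_carrier: "sel_mat n T \<in> carrier_mat n (card T)"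
  unfolding sel_mat_def by simp

lemma sel_apply:
  assumes T: "T \<subseteq> {..<n}" and i: "i < n"
  shows "(sel_mat n T *\<^sub>v Matrix.vec (card T) (\<lambda>k. v (sorted_list_of_set T ! k))) $ i = (if i \<in> T then v i else 0)"
proof -
  have fin: "finite T" using T finite_subset by blast
  define xs where "xs = sorted_list_of_set T"
  have xs: "distinct xs" "set xs = T" "length xs = card T" unfolding xs_def using fin by auto
  have "(sel_mat n T *\<^sub>v Matrix.vec (card T) (\<lambda>k. v (xs ! k))) $ i =
        (\<Sum>k<length xs. (if i = xs ! k then 1 else 0) * v (xs ! k))"
    using i xs(3) unfolding sel_mat_def xs_def
    by (simp add: mult_mat_vec_def scalar_prod_def atLeast0LessThan)
  also have "\<dots> = (\<Sum>k<length xs. (\<lambda>t. if t = i then v t else 0) (xs ! k))"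
    by (intro sum.cong) auto
  also have "\<dots> = (\<Sum>t\<in>T. if t = i then v t else 0)" using sum_nth_distinct[OF xs(1), of "\<lambda>t. if t = i then v t else 0"] xs(2) by simp
  also have "\<dots> = (if i \<in> T then v i else 0)" using fin by (simp add: sum.delta)
  finally show ?thesis unfolding xs_def .
qed

lemma sp_sym:
  fixes A :: "real Matrix.mat"
  assumes A: "A \<in> carrier_mat n n" "transpose_mat A = A" and z: "z \<in> carrier_vec n" "w \<in> carrier_vec n"
  shows "scalar_prod z (A *\<^sub>v w) = scalar_prod w (A *\<^sub>v z)"
  using bil_sym[OF symm_of[OF A]] sp_bil[OF A(1) z] sp_bil[OF A(1) z(2) z(1)] by simp

lemma sp_cs:
  fixes A :: "real Matrix.mat"
  assumes A: "A \<in> carrier_mat n n" "transpose_mat A = A" "psd_mat A" and z: "z \<in> carrier_vec n" "w \<in> carrier_vec n"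
  shows "(scalar_prod z (A *\<^sub>v w))\<^sup>2 \<le> scalar_prod z (A *\<^sub>v z) * scalar_prod w (A *\<^sub>v w)"
  using psd_cs[OF symm_of[OF A(1,2)] psd_of[OF A(1,3)]] sp_bil[OF A(1) z] sp_bil[OF A(1) z(1) z(1)]
    sp_bil[OF A(1) z(2) z(2)] by simp

lemma sp_psd:
  fixes A :: "real Matrix.mat"
  assumes A: "A \<in> carrier_mat n n" "psd_mat A" and z: "z \<in> carrier_vec n"
  shows "scalar_prod z (A *\<^sub>v z) \<ge> 0"
  using assms unfolding psd_mat_def by auto

lemma sp_self_nonneg: "scalar_prod (w :: real Matrix.vec) w \<ge> 0"
  by (simp add: scalar_prod_def sum_nonneg)

lemma outputs_good:
  assumes A: "A \<in> carrier_mat n n" "transpose_mat A = A" "psd_mat A" and T: "T \<subseteq> {..<n}"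
    and mu: "\<mu> \<ge> 0"
    and hyp: "scalar_prod (A *\<^sub>v yv) (A *\<^sub>v yv) > \<mu> * scalar_prod yv (A *\<^sub>v yv)"
    and yv: "yv = Matrix.vec n (\<lambda>i. if i \<in> T then v i else 0)"
    and u: "u \<in> algE_outputs A T"
  shows "scalar_prod u (A *\<^sub>v u) \<ge> \<mu>"
proof -
  define m where "m = card T"
  define S where "S = sel_mat n T"
  have S: "S \<in> carrier_mat n m" unfolding S_def m_def by (rule sel_mat_carrier)
  define B where "B = transpose_mat S * A * S"
  define C where "C = transpose_mat (A * S) * (A * S)"
  have dA: "dim_row A = n" using A by simp
  have yvc: "yv \<in> carrier_vec n" unfolding yv by simp
  define x0 where "x0 = Matrix.vec m (\<lambda>k. v (sorted_list_of_set T ! k))"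
  have x0: "x0 \<in> carrier_vec m" unfolding x0_def by simp
  have Sx0: "S *\<^sub>v x0 = yv"
    by (rule eq_vecI) (use S T sel_apply[OF T] in \<open>auto simp: yv x0_def S_def m_def\<close>)
  have Bq: "scalar_prod x (B *\<^sub>v x) = scalar_prod (S *\<^sub>v x) (A *\<^sub>v (S *\<^sub>v x))" if x: "x \<in> carrier_vec m" for x
  proof -
    have "B *\<^sub>v x = (transpose_mat S * A) *\<^sub>v (S *\<^sub>v x)"
      unfolding B_def by (rule assoc_mult_mat_vec) (use S A x in auto)
    also have "\<dots> = transpose_mat S *\<^sub>v (A *\<^sub>v (S *\<^sub>v x))"
      by (rule assoc_mult_mat_vec) (use S A x in auto)
    finally have "B *\<^sub>v x = transpose_mat S *\<^sub>v (A *\<^sub>v (S *\<^sub>v x))" .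
    hence "scalar_prod x (B *\<^sub>v x) = scalar_prod (transpose_mat S *\<^sub>v (A *\<^sub>v (S *\<^sub>v x))) x"
      using x S A by (simp add: comm_scalar_prod[of x m])
    also have "\<dots> = scalar_prod (A *\<^sub>v (S *\<^sub>v x)) (S *\<^sub>v x)"
      by (rule transpose_vec_mult_scalar[OF S x]) (use S A x in simp)
    also have "\<dots> = scalar_prod (S *\<^sub>v x) (A *\<^sub>v (S *\<^sub>v x))"
      using S A x by (simp add: comm_scalar_prod[of _ n])
    finally show ?thesis .
  qed
  have Cq: "scalar_prod x (C *\<^sub>v x) = scalar_prod (A *\<^sub>v (S *\<^sub>v x)) (A *\<^sub>v (S *\<^sub>v x))" if x: "x \<in> carrier_vec m" for x
  proof -
    have AS: "A * S \<in> carrier_mat n m" using A S by simp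
    have "C *\<^sub>v x = transpose_mat (A * S) *\<^sub>v ((A * S) *\<^sub>v x)"
      unfolding C_def using AS x by (simp add: assoc_mult_mat_vec)
    hence "scalar_prod x (C *\<^sub>v x) = scalar_prod (transpose_mat (A * S) *\<^sub>v ((A * S) *\<^sub>v x)) x"
      using x AS by (simp add: comm_scalar_prod[of x m])
    also have "\<dots> = scalar_prod ((A * S) *\<^sub>v x) ((A * S) *\<^sub>v x)"
      by (rule transpose_vec_mult_scalar[OF AS x]) (use AS x in simp)
    also have "(A * S) *\<^sub>v x = A *\<^sub>v (S *\<^sub>v x)" using A S x by (simp add: assoc_mult_mat_vec)
    finally show ?thesis .
  qed
  have numden: "scalar_prod z (A *\<^sub>v z) > 0" if z: "z \<in> carrier_vec n" and np: "scalar_prod (A *\<^sub>v z) (A *\<^sub>v z) > 0" for z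
  proof -
    have Az: "A *\<^sub>v z \<in> carrier_vec n" using A z by simp
    have "scalar_prod z (A *\<^sub>v (A *\<^sub>v z)) = scalar_prod (A *\<^sub>v z) (A *\<^sub>v z)"
      by (rule sp_sym[OF A(1,2) z Az])
    moreover have "(scalar_prod z (A *\<^sub>v (A *\<^sub>v z)))\<^sup>2 \<le> scalar_prod z (A *\<^sub>v z) * scalar_prod (A *\<^sub>v z) (A *\<^sub>v (A *\<^sub>v z))"
      by (rule sp_cs[OF A z Az])
    ultimately have "scalar_prod z (A *\<^sub>v z) \<noteq> 0" using np by auto
    thus ?thesis using sp_psd[OF A(1,3) z] by simp
  qed
  have den0: "scalar_prod yv (A *\<^sub>v yv) > 0"
  proof (rule numden[OF yvc])
    show "scalar_prod (A *\<^sub>v yv) (A *\<^sub>v yv) > 0"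
      using hyp mult_nonneg_nonneg[OF mu sp_psd[OF A(1,3) yvc]] by linarith
  qed
  have Bx0: "scalar_prod x0 (B *\<^sub>v x0) > 0" using den0 Bq[OF x0] Sx0 by simp
  have Bne: "B \<noteq> 0\<^sub>m m m"
  proof
    assume "B = 0\<^sub>m m m"
    hence "B *\<^sub>v x0 = 0\<^sub>v m" using x0 by (intro eq_vecI) (auto simp: scalar_prod_def)
    thus False using Bx0 x0 by simp
  qed
  have ratio0: "scalar_prod x0 (C *\<^sub>v x0) / scalar_prod x0 (B *\<^sub>v x0) > \<mu>"
    using hyp den0 Bq[OF x0] Cq[OF x0] Sx0 by (simp add: field_simps)
  from u Bne obtain x where x: "x \<in> carrier_vec m" "scalar_prod x (B *\<^sub>v x) > 0"
    and xmax: "\<forall>y\<in>carrier_vec m. scalar_prod y (B *\<^sub>v y) > 0 \<longrightarrow>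
        scalar_prod y (C *\<^sub>v y) / scalar_prod y (B *\<^sub>v y) \<le> scalar_prod x (C *\<^sub>v x) / scalar_prod x (B *\<^sub>v x)"
    and uu: "u = (1 / vnorm (A * S *\<^sub>v x)) \<cdot>\<^sub>v (A * S *\<^sub>v x)"
    unfolding algE_outputs_def Let_def dA m_def[symmetric] S_def[symmetric] B_def[symmetric] C_def[symmetric]
    by auto
  define z where "z = S *\<^sub>v x"
  have zc: "z \<in> carrier_vec n" unfolding z_def using S x by simp
  define w where "w = A *\<^sub>v z"
  have wc: "w \<in> carrier_vec n" unfolding w_def using A zc by simp
  have ASx: "A * S *\<^sub>v x = w" unfolding w_def z_def using A S x by (simp add: assoc_mult_mat_vec)
  define den where "den = scalar_prod z (A *\<^sub>v z)"
  define num where "num = scalar_prod w w"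
  have denp: "den > 0" unfolding den_def z_def using x Bq by simp
  have rat: "num / den > \<mu>"
    using xmax[rule_format, OF x0 Bx0] ratio0 Bq[OF x(1)] Cq[OF x(1)] unfolding num_def den_def w_def z_def by simp
  hence "num / den > 0" using mu by linarith
  hence nump: "num > 0" using denp by (simp add: zero_less_divide_iff)
  have zAw: "scalar_prod z (A *\<^sub>v w) = num" unfolding num_def w_def
    by (rule sp_sym[OF A(1,2) zc]) (use A zc in simp)
  have cs: "num\<^sup>2 \<le> den * scalar_prod w (A *\<^sub>v w)"
    using sp_cs[OF A zc wc] unfolding zAw den_def .
  have vn: "(vnorm w)\<^sup>2 = num" unfolding vnorm_def num_def using sp_self_nonneg by simp
  have vnp: "vnorm w > 0" using nump unfolding vnorm_def num_def by simp
  have "scalar_prod u (A *\<^sub>v u) = (1 / vnorm w)\<^sup>2 * scalar_prod w (A *\<^sub>v w)"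
    unfolding uu ASx using A wc by (simp add: power2_eq_square mult_mat_vec)
  also have "\<dots> = scalar_prod w (A *\<^sub>v w) / num" using vn by (simp add: power_divide)
  also have "\<dots> \<ge> num / den"
  proof -
    have "num * num \<le> den * scalar_prod w (A *\<^sub>v w)" using cs by (simp add: power2_eq_square)
    thus ?thesis using nump denp by (simp add: field_simps)
  qed
  finally show ?thesis using rat by simp
qed

definition indf :: "(nat \<Rightarrow> bool) \<Rightarrow> nat \<Rightarrow> real" where "indf f i = (if f i then 1 else 0)"

locale bsamp =
  fixes n :: nat and p :: real
  assumes p0: "0 \<le> p" and p1: "p \<le> 1"
begin

definition P :: "(nat \<Rightarrow> bool) pmf" where "P = Pi_pmf {..<n} False (\<lambda>_. bernoulli_pmf p)"

lemma finP: "finite (set_pmf P)"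
proof -
  have "set_pmf P \<subseteq> {f. \<forall>x. x \<notin> {..<n} \<longrightarrow> f x = False}"
    unfolding P_def by (rule set_Pi_pmf_subset) simp
  also have "\<dots> \<subseteq> (\<lambda>S x. x \<in> S) ` Pow {..<n}"
  proof
    fix f assume f: "f \<in> {f. \<forall>x. x \<notin> {..<n} \<longrightarrow> f x = False}"
    have "f = (\<lambda>x. x \<in> {x. f x})" by auto
    moreover have "{x. f x} \<in> Pow {..<n}" using f by auto
    ultimately show "f \<in> (\<lambda>S x. x \<in> S) ` Pow {..<n}" by blast
  qed
  finally show ?thesis by (rule finite_subset) auto
qed

lemma intP[simp, intro]: "integrable (measure_pmf P) (g :: _ \<Rightarrow> real)"
  by (rule integrable_measure_pmf_finite[OF finP])

lemma E_comp: "m < n \<Longrightarrow> measure_pmf.expectation P (\<lambda>f. g (f m)) = g True * p + g False * (1 - p)"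
proof -
  assume m: "m < n"
  have "measure_pmf.expectation P (\<lambda>f. g (f m)) = measure_pmf.expectation (map_pmf (\<lambda>f. f m) P) g"
    by simp
  also have "map_pmf (\<lambda>f. f m) P = bernoulli_pmf p" unfolding P_def using m by (simp add: Pi_pmf_component)
  finally show ?thesis using p0 p1 by simp
qed

lemma E_prod:
  fixes g :: "nat \<Rightarrow> bool \<Rightarrow> real"
  shows "measure_pmf.expectation P (\<lambda>f. \<Prod>m<n. g m (f m)) = (\<Prod>m<n. g m True * p + g m False * (1 - p))"
proof -
  have ind: "prob_space.indep_vars (measure_pmf P) (\<lambda>_. count_space UNIV) (\<lambda>x f. f x) {..<n}"
    unfolding P_def by (rule indep_vars_Pi_pmf) simp
  have ind2: "prob_space.indep_vars (measure_pmf P) (\<lambda>_. borel) (\<lambda>m f. g m (f m)) {..<n}"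
    by (rule prob_space.indep_vars_compose2[OF measure_pmf.prob_space_axioms ind]) auto
  have "measure_pmf.expectation P (\<lambda>f. \<Prod>m<n. g m (f m)) = (\<Prod>m<n. measure_pmf.expectation P (\<lambda>f. g m (f m)))"
    by (rule prob_space.indep_vars_lebesgue_integral[OF measure_pmf.prob_space_axioms _ ind2]) auto
  also have "\<dots> = (\<Prod>m<n. g m True * p + g m False * (1 - p))"
    by (intro prod.cong) (auto simp: E_comp)
  finally show ?thesis .
qed

definition xi :: "(nat \<Rightarrow> bool) \<Rightarrow> nat \<Rightarrow> real" where "xi f i = indf f i - p"

definition e :: "nat \<Rightarrow> real" where "e k = (1 - p) ^ k * p + (- p) ^ k * (1 - p)"

lemma e0: "e 0 = 1" unfolding e_def by simp
lemma e1: "e 1 = 0" unfolding e_def by (simp add: algebra_simps)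
lemma e2: "e 2 = p * (1 - p)" unfolding e_def by (simp add: power2_eq_square algebra_simps)
lemma e2': "e (Suc (Suc 0)) = p * (1 - p)" using e2 by (simp add: numeral_2_eq_2)
lemma e1': "e (Suc 0) = 0" using e1 by simp

lemma E_xipow: "measure_pmf.expectation P (\<lambda>f. \<Prod>m<n. (xi f m) ^ (c m)) = (\<Prod>m<n. e (c m))"
  using E_prod[of "\<lambda>m b. ((if b then 1 else 0) - p) ^ (c m)"] unfolding xi_def indf_def e_def
  by (simp add: if_distrib cong: if_cong)

end

lemma prod_pow_delta: fixes n :: nat shows "t < n \<Longrightarrow> (\<Prod>m<n. (x m :: real) ^ (if m = t then 1 else 0)) = x t"
proof -
  assume t: "t < n"
  have "(\<Prod>m<n. x m ^ (if m = t then 1 else 0)) = (\<Prod>m<n. if m = t then x m else 1)"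
    by (intro prod.cong) auto
  also have "\<dots> = x t" using t by (subst prod.delta) auto
  finally show ?thesis .
qed

definition dl :: "nat \<Rightarrow> nat \<Rightarrow> nat" where "dl t m = (if m = t then 1 else 0)"

lemma prod2: fixes n :: nat shows "i < n \<Longrightarrow> k < n \<Longrightarrow> (\<Prod>m<n. (x m :: real) ^ (dl i m + dl k m)) = x i * x k"
  by (simp add: power_add prod.distrib prod_pow_delta dl_def)

lemma prod4: fixes n :: nat shows "i < n \<Longrightarrow> j < n \<Longrightarrow> k < n \<Longrightarrow> l < n \<Longrightarrow>
  (\<Prod>m<n. (x m :: real) ^ (dl i m + dl j m + dl k m + dl l m)) = x i * x j * x k * x l"
  by (simp add: power_add prod.distrib prod_pow_delta dl_def)

lemma sum_delta2: fixes n :: nat assumes "i < n" "j < n"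
  shows "(\<Sum>k<n. \<Sum>l<n. if k = i \<and> l = j then c else 0) = (c :: real)"
proof -
  have "(\<Sum>k<n. \<Sum>l<n. if k = i \<and> l = j then c else 0) = (\<Sum>k<n. if k = i then c else 0)"
    using assms by (intro sum.cong refl) (auto simp: sum.delta')
  also have "\<dots> = c" using assms by simp
  finally show ?thesis .
qed

context bsamp
begin

lemma E2: assumes "i < n" "k < n"
  shows "measure_pmf.expectation P (\<lambda>f. xi f i * xi f k) = (if i = k then p * (1 - p) else 0)"
proof -
  have "measure_pmf.expectation P (\<lambda>f. xi f i * xi f k) = (\<Prod>m<n. e (dl i m + dl k m))"
    using E_xipow[of "\<lambda>m. dl i m + dl k m"] prod2[OF assms] by simp
  also have "\<dots> = (if i = k then p * (1 - p) else 0)"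
  proof (cases "i = k")
    case True
    have "(\<Prod>m<n. e (dl i m + dl k m)) = (\<Prod>m<n. if m = i then p * (1 - p) else 1)"
      using True by (intro prod.cong) (auto simp: dl_def e0 e2')
    thus ?thesis using True assms by (simp add: prod.delta)
  next
    case False
    have "(\<Prod>m<n. e (dl i m + dl k m)) = 0"
      using False assms by (intro prod_zero) (auto simp: dl_def e1' intro!: bexI[of _ i])
    thus ?thesis using False by simp
  qed
  finally show ?thesis .
qed

lemma E4: assumes "i < n" "j < n" "k < n" "l < n" "i \<noteq> j" "k \<noteq> l"
  shows "measure_pmf.expectation P (\<lambda>f. xi f i * xi f j * xi f k * xi f l) =
         (if (k = i \<and> l = j) \<or> (k = j \<and> l = i) then (p * (1 - p))\<^sup>2 else 0)"
proof -
  define c where "c m = dl i m + dl j m + dl k m + dl l m" for m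
  have "measure_pmf.expectation P (\<lambda>f. xi f i * xi f j * xi f k * xi f l) = (\<Prod>m<n. e (c m))"
    using E_xipow[of c] prod4[OF assms(1-4)] unfolding c_def by simp
  also have "\<dots> = (if (k = i \<and> l = j) \<or> (k = j \<and> l = i) then (p * (1 - p))\<^sup>2 else 0)"
  proof (cases "(k = i \<and> l = j) \<or> (k = j \<and> l = i)")
    case True
    have "(\<Prod>m<n. e (c m)) = (\<Prod>m<n. if m \<in> {i, j} then p * (1 - p) else 1)"
      using True assms(5) by (intro prod.cong) (auto simp: c_def dl_def e0 e2')
    also have "\<dots> = (\<Prod>m\<in>{..<n} \<inter> {i, j}. p * (1 - p))"
      by (simp add: prod.If_cases Int_def)
    also have "{..<n} \<inter> {i, j} = {i, j}" using assms by auto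
    finally show ?thesis using True assms(5) by (simp add: power2_eq_square)
  next
    case False
    have "\<exists>m\<in>{..<n}. c m = 1"
    proof (cases "k \<in> {i, j}")
      case False
      thus ?thesis using assms by (intro bexI[of _ k]) (auto simp: c_def dl_def)
    next
      case True
      hence "l \<notin> {i, j}" using \<open>\<not> ((k = i \<and> l = j) \<or> (k = j \<and> l = i))\<close> assms(6) by auto
      thus ?thesis using assms by (intro bexI[of _ l]) (auto simp: c_def dl_def)
    qed
    then obtain m0 where "m0 \<in> {..<n}" "c m0 = 1" by blast
    hence z: "(\<Prod>m<n. e (c m)) = 0" by (intro prod_zero) (auto simp: e1' intro!: bexI[of _ m0])
    show ?thesis unfolding if_not_P[OF False] by (rule z)
  qed
  finally show ?thesis .
qed

lemma E_sum: fixes g :: "'b \<Rightarrow> (nat \<Rightarrow> bool) \<Rightarrow> real" shows "measure_pmf.expectation P (\<lambda>f. \<Sum>i\<in>I. g i f) = (\<Sum>i\<in>I. measure_pmf.expectation P (g i))"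
  by (rule Bochner_Integration.integral_sum) auto

lemma E_cmult: fixes g :: "(nat \<Rightarrow> bool) \<Rightarrow> real" shows "measure_pmf.expectation P (\<lambda>f. c * g f) = c * measure_pmf.expectation P g"
  by (rule integral_mult_right_zero)

lemma EX2: "measure_pmf.expectation P (\<lambda>f. (\<Sum>i<n. s i * xi f i)\<^sup>2) = p * (1 - p) * (\<Sum>i<n. (s i)\<^sup>2)"
proof -
  have "(\<lambda>f. (\<Sum>i<n. s i * xi f i)\<^sup>2) = (\<lambda>f. \<Sum>i<n. \<Sum>k<n. (s i * s k) * (xi f i * xi f k))"
    by (auto simp: power2_eq_square sum_product algebra_simps)
  hence "measure_pmf.expectation P (\<lambda>f. (\<Sum>i<n. s i * xi f i)\<^sup>2) =
         (\<Sum>i<n. \<Sum>k<n. (s i * s k) * measure_pmf.expectation P (\<lambda>f. xi f i * xi f k))"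
    by (simp add: E_sum E_cmult)
  also have "\<dots> = (\<Sum>i<n. \<Sum>k<n. if k = i then p * (1 - p) * (s i)\<^sup>2 else 0)"
    by (intro sum.cong refl) (auto simp: E2 power2_eq_square)
  also have "\<dots> = p * (1 - p) * (\<Sum>i<n. (s i)\<^sup>2)" by (simp add: sum_distrib_left)
  finally show ?thesis .
qed

lemma EY2:
  assumes bd: "\<And>i. b i i = 0" and bs: "\<And>i j. i < n \<Longrightarrow> j < n \<Longrightarrow> b i j = b j i"
  shows "measure_pmf.expectation P (\<lambda>f. (\<Sum>i<n. \<Sum>j<n. b i j * xi f i * xi f j)\<^sup>2) =
         2 * (p * (1 - p))\<^sup>2 * (\<Sum>i<n. \<Sum>j<n. (b i j)\<^sup>2)"
proof -
  define q where "q = (p * (1 - p))\<^sup>2"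
  have "(\<lambda>f. (\<Sum>i<n. \<Sum>j<n. b i j * xi f i * xi f j)\<^sup>2) =
        (\<lambda>f. \<Sum>i<n. \<Sum>j<n. \<Sum>k<n. \<Sum>l<n. (b i j * b k l) * (xi f i * xi f j * xi f k * xi f l))"
  proof
    fix f
    have sq: "(\<Sum>i<n. \<Sum>j<n. X i j)\<^sup>2 = (\<Sum>i<n. \<Sum>j<n. \<Sum>k<n. \<Sum>l<n. X i j * X k l)" for X :: "nat \<Rightarrow> nat \<Rightarrow> real"
      by (simp only: power2_eq_square sum_distrib_right) (simp only: sum_distrib_left)
    show "(\<Sum>i<n. \<Sum>j<n. b i j * xi f i * xi f j)\<^sup>2 =
        (\<Sum>i<n. \<Sum>j<n. \<Sum>k<n. \<Sum>l<n. (b i j * b k l) * (xi f i * xi f j * xi f k * xi f l))"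
      unfolding sq by (intro sum.cong refl) (simp add: algebra_simps)
  qed
  hence "measure_pmf.expectation P (\<lambda>f. (\<Sum>i<n. \<Sum>j<n. b i j * xi f i * xi f j)\<^sup>2) =
    (\<Sum>i<n. \<Sum>j<n. \<Sum>k<n. \<Sum>l<n. (b i j * b k l) * measure_pmf.expectation P (\<lambda>f. xi f i * xi f j * xi f k * xi f l))"
    by (simp add: E_sum E_cmult)
  also have "\<dots> = (\<Sum>i<n. \<Sum>j<n. 2 * q * (b i j)\<^sup>2)"
  proof (intro sum.cong refl)
    fix i j assume i: "i \<in> {..<n}" and j: "j \<in> {..<n}"
    show "(\<Sum>k<n. \<Sum>l<n. (b i j * b k l) * measure_pmf.expectation P (\<lambda>f. xi f i * xi f j * xi f k * xi f l)) =
          2 * q * (b i j)\<^sup>2"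
    proof (cases "i = j")
      case True
      thus ?thesis using bd by simp
    next
      case False
      have "(\<Sum>k<n. \<Sum>l<n. (b i j * b k l) * measure_pmf.expectation P (\<lambda>f. xi f i * xi f j * xi f k * xi f l)) =
            (\<Sum>k<n. \<Sum>l<n. (if k = i \<and> l = j then b i j * b i j * q else 0) + (if k = j \<and> l = i then b i j * b j i * q else 0))"
      proof (intro sum.cong refl)
        fix k l assume k: "k \<in> {..<n}" and l: "l \<in> {..<n}"
        show "(b i j * b k l) * measure_pmf.expectation P (\<lambda>f. xi f i * xi f j * xi f k * xi f l) =
          (if k = i \<and> l = j then b i j * b i j * q else 0) + (if k = j \<and> l = i then b i j * b j i * q else 0)"
        proof (cases "k = l")
          case True
          thus ?thesis using bd False by auto
        next
          case False2: False
          show ?thesis using E4[of i j k l] i j k l False False2 unfolding q_def by auto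
        qed
      qed
      also have "\<dots> = b i j * b i j * q + b i j * b j i * q"
        using i j by (simp only: sum.distrib sum_delta2 lessThan_iff)
      also have "\<dots> = 2 * q * (b i j)\<^sup>2" using bs i j by (simp add: power2_eq_square)
      finally show ?thesis .
    qed
  qed
  also have "\<dots> = 2 * q * (\<Sum>i<n. \<Sum>j<n. (b i j)\<^sup>2)" by (simp add: sum_distrib_left)
  finally show ?thesis unfolding q_def .
qed

lemma markov:
  assumes nn: "\<And>f. Z f \<ge> 0" and t: "t > 0"
  shows "measure_pmf.prob P {f. Z f \<ge> t} \<le> measure_pmf.expectation P Z / t"
proof -
  have "measure (measure_pmf P) {f \<in> space (measure_pmf P). Z f \<ge> t} \<le> measure_pmf.expectation P Z / t"
    by (rule integral_Markov_inequality_measure[where A = UNIV]) (use nn t in auto)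
  thus ?thesis by simp
qed

lemma decomp:
  assumes bs: "\<And>i j. i < n \<Longrightarrow> j < n \<Longrightarrow> b i j = b j i"
  shows "(\<Sum>i<n. \<Sum>j<n. b i j * indf f i * indf f j) - p\<^sup>2 * (\<Sum>i<n. \<Sum>j<n. b i j) =
         2 * p * (\<Sum>i<n. (\<Sum>j<n. b i j) * xi f i) + (\<Sum>i<n. \<Sum>j<n. b i j * xi f i * xi f j)"
proof -
  have ind: "indf f i = p + xi f i" for i unfolding xi_def by simp
  have "(\<Sum>i<n. \<Sum>j<n. b i j * indf f i * indf f j) =
        (\<Sum>i<n. \<Sum>j<n. p\<^sup>2 * b i j + p * (b i j * xi f i) + p * (b i j * xi f j) + b i j * xi f i * xi f j)"
    unfolding ind by (intro sum.cong refl) (simp add: algebra_simps power2_eq_square)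
  also have "\<dots> = p\<^sup>2 * (\<Sum>i<n. \<Sum>j<n. b i j) + p * (\<Sum>i<n. \<Sum>j<n. b i j * xi f i)
      + p * (\<Sum>i<n. \<Sum>j<n. b i j * xi f j) + (\<Sum>i<n. \<Sum>j<n. b i j * xi f i * xi f j)"
    by (simp add: sum.distrib sum_distrib_left)
  also have "(\<Sum>i<n. \<Sum>j<n. b i j * xi f j) = (\<Sum>i<n. \<Sum>j<n. b i j * xi f i)"
  proof -
    have "(\<Sum>i<n. \<Sum>j<n. b i j * xi f j) = (\<Sum>j<n. \<Sum>i<n. b i j * xi f j)" by (rule sum.swap)
    also have "\<dots> = (\<Sum>j<n. \<Sum>i<n. b j i * xi f j)" by (intro sum.cong refl) (simp add: bs)
    finally show ?thesis .
  qed
  also have "(\<Sum>i<n. \<Sum>j<n. b i j * xi f i) = (\<Sum>i<n. (\<Sum>j<n. b i j) * xi f i)"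
    by (simp add: sum_distrib_right)
  finally show ?thesis by simp
qed

lemma chaos_tail:
  assumes bd: "\<And>i. b i i = 0" and bs: "\<And>i j. i < n \<Longrightarrow> j < n \<Longrightarrow> b i j = b j i" and t: "t > 0"
  shows "measure_pmf.prob P {f. ((\<Sum>i<n. \<Sum>j<n. b i j * indf f i * indf f j) - p\<^sup>2 * (\<Sum>i<n. \<Sum>j<n. b i j))\<^sup>2 \<ge> t}
    \<le> (8 * p\<^sup>2 * (p * (1 - p)) * (\<Sum>i<n. (\<Sum>j<n. b i j)\<^sup>2) + 4 * (p * (1 - p))\<^sup>2 * (\<Sum>i<n. \<Sum>j<n. (b i j)\<^sup>2)) / t"
proof -
  define X where "X f = (\<Sum>i<n. (\<Sum>j<n. b i j) * xi f i)" for f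
  define Y where "Y f = (\<Sum>i<n. \<Sum>j<n. b i j * xi f i * xi f j)" for f
  define Z where "Z f = 8 * p\<^sup>2 * (X f)\<^sup>2 + 2 * (Y f)\<^sup>2" for f
  have le: "((\<Sum>i<n. \<Sum>j<n. b i j * indf f i * indf f j) - p\<^sup>2 * (\<Sum>i<n. \<Sum>j<n. b i j))\<^sup>2 \<le> Z f" for f
  proof -
    have "((\<Sum>i<n. \<Sum>j<n. b i j * indf f i * indf f j) - p\<^sup>2 * (\<Sum>i<n. \<Sum>j<n. b i j))\<^sup>2 = (2 * p * X f + Y f)\<^sup>2"
      unfolding X_def Y_def by (rule arg_cong[where f="\<lambda>z. z\<^sup>2"], rule decomp[OF bs])
    also have "\<dots> \<le> Z f" unfolding Z_def
      using zero_le_power2[of "2 * p * X f - Y f"] by (simp add: power2_eq_square algebra_simps)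
    finally show ?thesis .
  qed
  have "measure_pmf.prob P {f. ((\<Sum>i<n. \<Sum>j<n. b i j * indf f i * indf f j) - p\<^sup>2 * (\<Sum>i<n. \<Sum>j<n. b i j))\<^sup>2 \<ge> t}
      \<le> measure_pmf.prob P {f. Z f \<ge> t}"
    by (rule measure_pmf.finite_measure_mono) (use le order_trans in auto)
  also have "\<dots> \<le> measure_pmf.expectation P Z / t"
    by (rule markov[OF _ t]) (simp add: Z_def)
  also have "measure_pmf.expectation P Z = 8 * p\<^sup>2 * (p * (1 - p) * (\<Sum>i<n. (\<Sum>j<n. b i j)\<^sup>2)) +
       2 * (2 * (p * (1 - p))\<^sup>2 * (\<Sum>i<n. \<Sum>j<n. (b i j)\<^sup>2))"
    unfolding Z_def X_def Y_def by (simp add: EX2 EY2[OF bd bs])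
  finally show ?thesis by (simp add: algebra_simps)
qed

end


definition A2 :: "nat \<Rightarrow> (nat \<Rightarrow> nat \<Rightarrow> real) \<Rightarrow> nat \<Rightarrow> nat \<Rightarrow> real" where
  "A2 n a i j = (\<Sum>k<n. a i k * a k j)"

locale specsetup =
  fixes n :: nat and a :: "nat \<Rightarrow> nat \<Rightarrow> real" and lam :: real and v :: "nat \<Rightarrow> real"
  assumes sa: "symm n a" and pa: "psd n a" and ab: "\<And>i j. i < n \<Longrightarrow> j < n \<Longrightarrow> \<bar>a i j\<bar> \<le> 1"
    and lampos: "lam > 0" and lamub: "\<And>x. bil n a x x \<le> lam * (\<Sum>i<n. (x i)\<^sup>2)"
    and eigv: "\<And>i. i < n \<Longrightarrow> mv n a v i = lam * v i" and vnorm1: "(\<Sum>i<n. (v i)\<^sup>2) = 1"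
begin

lemma asym: "i < n \<Longrightarrow> j < n \<Longrightarrow> a i j = a j i" using sa unfolding symm_def by auto

lemma adiag: "i < n \<Longrightarrow> 0 \<le> a i i \<and> a i i \<le> 1"
  using psd_diag[OF pa] ab[of i i] by auto

lemma A2_diag_sq: "i < n \<Longrightarrow> A2 n a i i = (\<Sum>k<n. (a i k)\<^sup>2)"
  unfolding A2_def by (intro sum.cong refl) (auto simp: asym power2_eq_square)

lemma A2_sym: "i < n \<Longrightarrow> j < n \<Longrightarrow> A2 n a i j = A2 n a j i"
  unfolding A2_def by (intro sum.cong refl) (auto simp: asym)

lemma A2_diag_le: assumes i: "i < n" shows "A2 n a i i \<le> lam * a i i"
proof -
  have "(\<Sum>k<n. (mv n a (ev i) k)\<^sup>2) \<le> lam * bil n a (ev i) (ev i)"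
    by (rule mv_sq_lambda[OF sa pa lamub])
  moreover have "mv n a (ev i) k = a i k" if "k < n" for k
    using that i unfolding mv_def by (simp add: ev_mult' sum.delta asym)
  ultimately show ?thesis using i by (simp add: A2_diag_sq bil_ev_ev)
qed

lemma A2_diag_nonneg: "i < n \<Longrightarrow> A2 n a i i \<ge> 0"
  by (simp add: A2_diag_sq sum_nonneg)

lemma A2_abs: assumes i: "i < n" and j: "j < n" shows "\<bar>A2 n a i j\<bar> \<le> lam"
proof -
  have "(A2 n a i j)\<^sup>2 \<le> (\<Sum>k<n. (a i k)\<^sup>2) * (\<Sum>k<n. (a k j)\<^sup>2)"
    unfolding A2_def by (rule Cauchy_Schwarz_ineq_sum)
  also have "(\<Sum>k<n. (a k j)\<^sup>2) = (\<Sum>k<n. (a j k)\<^sup>2)" using j by (intro sum.cong refl) (simp add: asym)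
  also have "(\<Sum>k<n. (a i k)\<^sup>2) * (\<Sum>k<n. (a j k)\<^sup>2) = A2 n a i i * A2 n a j j"
    using i j by (simp add: A2_diag_sq)
  also have "\<dots> \<le> lam * lam"
  proof (rule mult_mono)
    show "A2 n a i i \<le> lam" using A2_diag_le[OF i] adiag[OF i] lampos
      by (smt (verit) mult_left_le)
    show "A2 n a j j \<le> lam" using A2_diag_le[OF j] adiag[OF j] lampos
      by (smt (verit) mult_left_le)
  qed (use lampos A2_diag_nonneg[OF j] in auto)
  finally have "(A2 n a i j)\<^sup>2 \<le> lam\<^sup>2" by (simp add: power2_eq_square)
  thus ?thesis using lampos by (simp add: abs_le_square_iff[symmetric] power2_abs)
qed

lemma bil_vv: "bil n a v v = lam"
proof -
  have "bil n a v v = (\<Sum>i<n. v i * (lam * v i))" unfolding bil_mv by (intro sum.cong refl) (simp add: eigv)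
  also have "\<dots> = lam * (\<Sum>i<n. (v i)\<^sup>2)" by (simp add: sum_distrib_left power2_eq_square algebra_simps)
  finally show ?thesis using vnorm1 by simp
qed

lemma v_sq: assumes i: "i < n" shows "(v i)\<^sup>2 \<le> 1 / lam"
proof -
  have "(bil n a (ev i) v)\<^sup>2 \<le> bil n a (ev i) (ev i) * bil n a v v" by (rule psd_cs[OF sa pa])
  moreover have "bil n a (ev i) v = lam * v i" using i by (simp add: bil_ev_left eigv)
  moreover have "bil n a (ev i) (ev i) = a i i" using i by (rule bil_ev_ev)
  ultimately have "(lam * v i)\<^sup>2 \<le> a i i * lam" by (simp add: bil_vv)
  also have "\<dots> \<le> lam" using adiag[OF i] lampos by (simp add: mult_left_le_one_le)
  finally have "lam * (lam * (v i)\<^sup>2) \<le> lam * 1" by (simp add: power2_eq_square algebra_simps)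
  hence "lam * (v i)\<^sup>2 \<le> 1" using lampos by simp
  thus ?thesis using lampos by (simp add: field_simps)
qed

lemma A2_v: assumes i: "i < n" shows "(\<Sum>j<n. A2 n a i j * v j) = lam\<^sup>2 * v i"
proof -
  have "(\<Sum>j<n. A2 n a i j * v j) = (\<Sum>k<n. a i k * mv n a v k)"
    unfolding A2_def mv_def by (simp add: sum_distrib_left sum_distrib_right mult.assoc) (rule sum.swap)
  also have "\<dots> = (\<Sum>k<n. a i k * (lam * v k))" by (intro sum.cong refl) (simp add: eigv)
  also have "\<dots> = lam * mv n a v i" unfolding mv_def by (simp add: sum_distrib_left algebra_simps)
  finally show ?thesis using eigv[OF i] by (simp add: power2_eq_square)
qed

end


locale coresetup = specsetup +
  fixes N :: real
  assumes N1: "N \<ge> 1" and lamN: "lam > N"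
begin

definition mu0 where "mu0 = lam - N"
definition M where "M i j = A2 n a i j - mu0 * a i j"
definition bb where "bb i j = (if i = j then 0 else M i j * v i * v j)"

lemma mu0: "0 \<le> mu0" "mu0 \<le> lam" unfolding mu0_def using lamN N1 by auto

lemma M_diag_lb: assumes i: "i < n" shows "M i i \<ge> - lam"
proof -
  have "mu0 * a i i \<le> lam * 1" using mu0 adiag[OF i] by (intro mult_mono) auto
  thus ?thesis unfolding M_def using A2_diag_nonneg[OF i] by simp
qed

lemma M_diag_ub: assumes i: "i < n" shows "M i i \<le> N"
proof -
  have "M i i \<le> lam * a i i - mu0 * a i i" unfolding M_def using A2_diag_le[OF i] by simp
  also have "\<dots> = N * a i i" unfolding mu0_def by (simp add: algebra_simps)
  also have "\<dots> \<le> N" using adiag[OF i] N1 by (simp add: mult_left_le)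
  finally show ?thesis .
qed

lemma M_abs: assumes i: "i < n" and j: "j < n" shows "\<bar>M i j\<bar> \<le> 2 * lam"
proof -
  have "\<bar>mu0 * a i j\<bar> \<le> lam * 1" unfolding abs_mult using mu0 ab[OF i j] by (intro mult_mono) auto
  thus ?thesis unfolding M_def using A2_abs[OF i j] by simp
qed

lemma M_sym: "i < n \<Longrightarrow> j < n \<Longrightarrow> M i j = M j i"
  unfolding M_def by (simp add: A2_sym asym)

lemma M_v: assumes i: "i < n" shows "(\<Sum>j<n. M i j * v j) = N * lam * v i"
proof -
  have "(\<Sum>j<n. M i j * v j) = (\<Sum>j<n. A2 n a i j * v j) - mu0 * mv n a v i"
    unfolding M_def mv_def by (simp add: algebra_simps sum_subtractf sum_distrib_left)
  also have "\<dots> = lam\<^sup>2 * v i - mu0 * (lam * v i)" by (simp add: A2_v[OF i] eigv[OF i])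
  finally show ?thesis unfolding mu0_def by (simp add: power2_eq_square algebra_simps)
qed

lemma bb_diag: "bb i i = 0" unfolding bb_def by simp
lemma bb_sym: "i < n \<Longrightarrow> j < n \<Longrightarrow> bb i j = bb j i" unfolding bb_def by (simp add: M_sym)

lemma bb_s: assumes i: "i < n" shows "(\<Sum>j<n. bb i j) = (v i)\<^sup>2 * (N * lam - M i i)"
proof -
  have "(\<Sum>j<n. bb i j) = (\<Sum>j<n. v i * (M i j * v j) - (if j = i then M i i * v i * v i else 0))"
    unfolding bb_def by (intro sum.cong refl) (auto simp: algebra_simps)
  also have "\<dots> = (\<Sum>j<n. v i * (M i j * v j)) - (\<Sum>j<n. if j = i then M i i * v i * v i else 0)"
    by (rule sum_subtractf)
  also have "\<dots> = v i * (N * lam * v i) - M i i * v i * v i"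
    using i by (simp add: sum_distrib_left[symmetric] M_v)
  finally show ?thesis by (simp add: power2_eq_square algebra_simps)
qed

lemma s_bound: assumes i: "i < n" shows "\<bar>N * lam - M i i\<bar> \<le> 2 * N * lam"
proof -
  have l1: "lam \<ge> 1" using lamN N1 by simp
  have "N * lam \<ge> N" using N1 l1 by (simp add: mult_le_cancel_left1)
  moreover have "N * lam \<ge> lam" using N1 l1 by (simp add: mult_le_cancel_right1)
  ultimately show ?thesis using M_diag_lb[OF i] M_diag_ub[OF i] by simp
qed

lemma sum_s_sq: "(\<Sum>i<n. (\<Sum>j<n. bb i j)\<^sup>2) \<le> 4 * N\<^sup>2 * lam"
proof -
  have "(\<Sum>i<n. (\<Sum>j<n. bb i j)\<^sup>2) \<le> (\<Sum>i<n. (v i)\<^sup>2 * (4 * N\<^sup>2 * lam))"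
  proof (intro sum_mono)
    fix i assume i: "i \<in> {..<n}"
    have "(\<Sum>j<n. bb i j)\<^sup>2 = (v i)\<^sup>2 * ((v i)\<^sup>2 * (N * lam - M i i)\<^sup>2)"
      using i by (simp add: bb_s power_mult_distrib power2_eq_square)
    also have "\<dots> \<le> (v i)\<^sup>2 * ((1 / lam) * (2 * N * lam)\<^sup>2)"
    proof (intro mult_left_mono mult_mono)
      show "(v i)\<^sup>2 \<le> 1 / lam" using i v_sq by simp
      show "(N * lam - M i i)\<^sup>2 \<le> (2 * N * lam)\<^sup>2"
        proof -
        have "\<bar>N * lam - M i i\<bar> \<le> \<bar>2 * N * lam\<bar>" using s_bound[of i] i N1 lampos by simp
        thus ?thesis by (simp only: abs_le_square_iff)
      qed
    qed (use lampos in auto)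
    also have "\<dots> = (v i)\<^sup>2 * (4 * N\<^sup>2 * lam)" using lampos by (simp add: power2_eq_square field_simps)
    finally show "(\<Sum>j<n. bb i j)\<^sup>2 \<le> (v i)\<^sup>2 * (4 * N\<^sup>2 * lam)" .
  qed
  also have "\<dots> = 4 * N\<^sup>2 * lam" using vnorm1 by (simp add: sum_distrib_right[symmetric])
  finally show ?thesis .
qed

lemma sum_bb_sq: "(\<Sum>i<n. \<Sum>j<n. (bb i j)\<^sup>2) \<le> 4 * lam\<^sup>2"
proof -
  have "(\<Sum>i<n. \<Sum>j<n. (bb i j)\<^sup>2) \<le> (\<Sum>i<n. \<Sum>j<n. (4 * lam\<^sup>2) * ((v i)\<^sup>2 * (v j)\<^sup>2))"
  proof (intro sum_mono)
    fix i j assume i: "i \<in> {..<n}" and j: "j \<in> {..<n}"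
    have "\<bar>M i j\<bar> \<le> \<bar>2 * lam\<bar>" using M_abs[of i j] i j lampos by simp
    hence "(M i j)\<^sup>2 \<le> (2 * lam)\<^sup>2" by (simp only: abs_le_square_iff)
    hence "(M i j)\<^sup>2 * ((v i)\<^sup>2 * (v j)\<^sup>2) \<le> (2 * lam)\<^sup>2 * ((v i)\<^sup>2 * (v j)\<^sup>2)"
      by (intro mult_right_mono) auto
    show "(bb i j)\<^sup>2 \<le> (4 * lam\<^sup>2) * ((v i)\<^sup>2 * (v j)\<^sup>2)"
    proof (cases "i = j")
      case True
      have "0 \<le> (4 * lam\<^sup>2) * ((v i)\<^sup>2 * (v j)\<^sup>2)" by (intro mult_nonneg_nonneg) auto
      thus ?thesis using True by (simp add: bb_def)
    next
      case False
      hence "(bb i j)\<^sup>2 = (M i j)\<^sup>2 * ((v i)\<^sup>2 * (v j)\<^sup>2)" by (simp add: bb_def power_mult_distrib)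
      thus ?thesis using \<open>(M i j)\<^sup>2 * ((v i)\<^sup>2 * (v j)\<^sup>2) \<le> (2 * lam)\<^sup>2 * ((v i)\<^sup>2 * (v j)\<^sup>2)\<close>
        by (simp add: power_mult_distrib)
    qed
  qed
  also have "\<dots> = 4 * lam\<^sup>2" using vnorm1
    by (simp add: sum_distrib_left[symmetric] sum_distrib_right[symmetric])
  finally show ?thesis .
qed

lemma sum_bb: "(\<Sum>i<n. \<Sum>j<n. bb i j) \<ge> N * (lam - 1)"
proof -
  have "(\<Sum>i<n. (v i)\<^sup>2 * (N * lam - N)) \<le> (\<Sum>i<n. \<Sum>j<n. bb i j)"
    by (intro sum_mono) (auto simp: bb_s M_diag_ub intro!: mult_left_mono)
  moreover have "(\<Sum>i<n. (v i)\<^sup>2 * (N * lam - N)) = N * (lam - 1)"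
    by (simp only: sum_distrib_right[symmetric] vnorm1) (simp add: algebra_simps)
  ultimately show ?thesis by simp
qed

lemma Q_decomp:
  fixes f :: "nat \<Rightarrow> bool"
  defines "y \<equiv> (\<lambda>i. indf f i * v i)"
  shows "(\<Sum>i<n. (mv n a y i)\<^sup>2) - mu0 * bil n a y y =
    (\<Sum>i<n. M i i * (v i)\<^sup>2 * indf f i) + (\<Sum>i<n. \<Sum>j<n. bb i j * indf f i * indf f j)"
proof -
  have sq: "(\<Sum>i<n. (mv n a y i)\<^sup>2) = (\<Sum>j<n. \<Sum>l<n. A2 n a j l * y j * y l)"
  proof -
    have "(\<Sum>i<n. (mv n a y i)\<^sup>2) = (\<Sum>i<n. (\<Sum>j<n. a i j * y j) * (\<Sum>l<n. a i l * y l))"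
      unfolding mv_def by (simp add: power2_eq_square)
    also have "\<dots> = (\<Sum>i<n. \<Sum>j<n. \<Sum>l<n. a i j * y j * (a i l * y l))"
      by (simp only: sum_product)
    also have "\<dots> = (\<Sum>j<n. \<Sum>i<n. \<Sum>l<n. a i j * y j * (a i l * y l))"
      by (rule sum.swap)
    also have "\<dots> = (\<Sum>j<n. \<Sum>l<n. \<Sum>i<n. a i j * y j * (a i l * y l))"
      by (rule sum.cong[OF refl], rule sum.swap)
    also have "\<dots> = (\<Sum>j<n. \<Sum>l<n. A2 n a j l * y j * y l)"
    proof (intro sum.cong refl)
      fix j l assume j: "j \<in> {..<n}" and l: "l \<in> {..<n}"
      have "A2 n a j l * y j * y l = (\<Sum>i<n. a j i * a i l * y j * y l)" unfolding A2_def by (simp add: sum_distrib_right)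
      also have "\<dots> = (\<Sum>i<n. a i j * y j * (a i l * y l))"
        using j by (intro sum.cong refl) (auto simp: asym[of j] algebra_simps)
      finally show "(\<Sum>i<n. a i j * y j * (a i l * y l)) = A2 n a j l * y j * y l" by simp
    qed
    finally show ?thesis .
  qed
  have "(\<Sum>i<n. (mv n a y i)\<^sup>2) - mu0 * bil n a y y = (\<Sum>j<n. \<Sum>l<n. M j l * y j * y l)"
    unfolding sq bil_def M_def by (simp add: sum_subtractf[symmetric] sum_distrib_left algebra_simps)
  also have "\<dots> = (\<Sum>j<n. \<Sum>l<n. (if l = j then M j j * (v j)\<^sup>2 * indf f j else 0) + bb j l * indf f j * indf f l)"
    unfolding y_def bb_def indf_def by (intro sum.cong refl) (auto simp: power2_eq_square)
  also have "\<dots> = (\<Sum>i<n. M i i * (v i)\<^sup>2 * indf f i) + (\<Sum>i<n. \<Sum>j<n. bb i j * indf f i * indf f j)"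
    by (simp add: sum.distrib)
  finally show ?thesis .
qed

end


locale coreprob = coresetup n a lam v N + bsamp n p
  for n a lam v N p +
  assumes pN: "p * N = 4096"
begin

lemma ppos: "p > 0" using pN p0 by (cases "p = 0") auto
lemma Nbig: "N \<ge> 4096"
proof -
  have "p * N \<le> 1 * N" using p1 N1 by (intro mult_right_mono) auto
  thus ?thesis using pN by simp
qed

lemma plam: "p * lam \<ge> 4096"
proof -
  have "p * N \<le> p * lam" using lamN p0 by (intro mult_left_mono) auto
  thus ?thesis using pN by simp
qed

lemma E_ind: "i < n \<Longrightarrow> measure_pmf.expectation P (\<lambda>f. indf f i) = p"
  unfolding indf_def using E_comp[of i "\<lambda>b. if b then 1 else 0"] by simp

lemma bad_prob:
  "measure_pmf.prob P {f. \<not> ((\<Sum>i<n. (mv n a (\<lambda>i. indf f i * v i) i)\<^sup>2) >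
       mu0 * bil n a (\<lambda>i. indf f i * v i) (\<lambda>i. indf f i * v i))} \<le> 1 / 4"
proof -
  define W where "W f = (\<Sum>i<n. (v i)\<^sup>2 * indf f i)" for f
  define Of where "Of f = (\<Sum>i<n. \<Sum>j<n. bb i j * indf f i * indf f j)" for f
  define m where "m = p\<^sup>2 * (\<Sum>i<n. \<Sum>j<n. bb i j)"
  have lam2: "lam \<ge> 2" using lamN Nbig by simp
  have m0: "m \<ge> 2048 * (p * lam)"
  proof -
    have "m \<ge> p\<^sup>2 * (N * (lam - 1))" unfolding m_def using sum_bb by (intro mult_left_mono) auto
    moreover have "N * (lam / 2) \<le> N * (lam - 1)" using lam2 N1 by (intro mult_left_mono) auto
    hence "p\<^sup>2 * (N * (lam - 1)) \<ge> p\<^sup>2 * (N * (lam / 2))" by (rule mult_left_mono) simp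
    moreover have "p\<^sup>2 * (N * (lam / 2)) = (p * N) * (p * lam) / 2" by (simp add: power2_eq_square)
    moreover have "(p * N) * (p * lam) / 2 = 2048 * (p * lam)" unfolding pN by simp
    ultimately show ?thesis by linarith
  qed
  have mpos: "m > 0" using m0 plam by simp
  have Dlb: "(\<Sum>i<n. M i i * (v i)\<^sup>2 * indf f i) \<ge> - lam * W f" for f
  proof -
    have "(\<Sum>i<n. (- lam) * ((v i)\<^sup>2 * indf f i)) \<le> (\<Sum>i<n. M i i * (v i)\<^sup>2 * indf f i)"
    proof (intro sum_mono)
      fix i assume i: "i \<in> {..<n}"
      have "0 \<le> (v i)\<^sup>2 * indf f i" by (simp add: indf_def)
      hence "(- lam) * ((v i)\<^sup>2 * indf f i) \<le> M i i * ((v i)\<^sup>2 * indf f i)"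
        using M_diag_lb[of i] i by (intro mult_right_mono) auto
      thus "(- lam) * ((v i)\<^sup>2 * indf f i) \<le> M i i * (v i)\<^sup>2 * indf f i" by (simp add: mult.assoc)
    qed
    thus ?thesis unfolding W_def by (simp add: sum_distrib_left)
  qed
  have sub: "{f. \<not> ((\<Sum>i<n. (mv n a (\<lambda>i. indf f i * v i) i)\<^sup>2) >
       mu0 * bil n a (\<lambda>i. indf f i * v i) (\<lambda>i. indf f i * v i))}
     \<subseteq> {f. lam * W f \<ge> m / 2} \<union> {f. (Of f - m)\<^sup>2 \<ge> m\<^sup>2 / 4}"
  proof
    fix f assume "f \<in> {f. \<not> ((\<Sum>i<n. (mv n a (\<lambda>i. indf f i * v i) i)\<^sup>2) >
       mu0 * bil n a (\<lambda>i. indf f i * v i) (\<lambda>i. indf f i * v i))}"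
    hence Q: "(\<Sum>i<n. M i i * (v i)\<^sup>2 * indf f i) + Of f \<le> 0"
      using Q_decomp[of f] unfolding Of_def by simp
    show "f \<in> {f. lam * W f \<ge> m / 2} \<union> {f. (Of f - m)\<^sup>2 \<ge> m\<^sup>2 / 4}"
    proof (cases "lam * W f \<ge> m / 2")
      case False
      hence "Of f < m / 2" using Q Dlb[of f] by simp
      hence "m / 2 \<le> \<bar>Of f - m\<bar>" by (simp add: abs_if)
      hence "(m / 2)\<^sup>2 \<le> (Of f - m)\<^sup>2"
        using mpos by (metis abs_le_square_iff abs_of_nonneg less_imp_le half_gt_zero)
      thus ?thesis by (simp add: power_divide)
    qed simp
  qed
  have "measure_pmf.prob P {f. \<not> ((\<Sum>i<n. (mv n a (\<lambda>i. indf f i * v i) i)\<^sup>2) >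
       mu0 * bil n a (\<lambda>i. indf f i * v i) (\<lambda>i. indf f i * v i))}
     \<le> measure_pmf.prob P ({f. lam * W f \<ge> m / 2} \<union> {f. (Of f - m)\<^sup>2 \<ge> m\<^sup>2 / 4})"
    by (rule measure_pmf.finite_measure_mono[OF sub]) simp
  also have "\<dots> \<le> measure_pmf.prob P {f. lam * W f \<ge> m / 2} + measure_pmf.prob P {f. (Of f - m)\<^sup>2 \<ge> m\<^sup>2 / 4}"
    by (rule measure_Un_le) auto
  also have "measure_pmf.prob P {f. lam * W f \<ge> m / 2} \<le> 1 / 1024"
  proof -
    have "measure_pmf.prob P {f. lam * W f \<ge> m / 2} \<le> measure_pmf.expectation P (\<lambda>f. lam * W f) / (m / 2)"
      by (rule markov) (use mpos lampos in \<open>auto simp: W_def indf_def intro!: sum_nonneg mult_nonneg_nonneg\<close>)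
    also have "measure_pmf.expectation P (\<lambda>f. lam * W f) = lam * p"
    proof -
      have "measure_pmf.expectation P (\<lambda>f. lam * W f) = lam * (\<Sum>i<n. (v i)\<^sup>2 * measure_pmf.expectation P (\<lambda>f. indf f i))"
        unfolding W_def by (simp add: E_cmult E_sum)
      also have "\<dots> = lam * (\<Sum>i<n. (v i)\<^sup>2 * p)" by (simp add: E_ind)
      also have "\<dots> = lam * p" by (simp add: sum_distrib_right[symmetric] vnorm1)
      finally show ?thesis .
    qed
    also have "lam * p / (m / 2) \<le> lam * p / (2048 * (p * lam) / 2)"
      using m0 plam lampos ppos by (intro divide_left_mono) (auto simp: mult.commute)
    also have "\<dots> = 1 / 1024" using lampos ppos by (simp add: field_simps)
    finally show ?thesis .
  qed
  also have "measure_pmf.prob P {f. (Of f - m)\<^sup>2 \<ge> m\<^sup>2 / 4} \<le> 1 / 8 + 1 / 65536"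
  proof -
    define EB where "EB = 8 * p\<^sup>2 * (p * (1 - p)) * (\<Sum>i<n. (\<Sum>j<n. bb i j)\<^sup>2) + 4 * (p * (1 - p))\<^sup>2 * (\<Sum>i<n. \<Sum>j<n. (bb i j)\<^sup>2)"
    have "measure_pmf.prob P {f. (Of f - m)\<^sup>2 \<ge> m\<^sup>2 / 4} \<le> EB / (m\<^sup>2 / 4)"
      unfolding Of_def m_def EB_def by (rule chaos_tail[OF bb_diag bb_sym]) (use mpos m_def in auto)
    also have "EB \<le> 32 * p * 4096\<^sup>2 * lam + 16 * p\<^sup>2 * lam\<^sup>2"
    proof -
      have pq: "0 \<le> p * (1 - p)" "p * (1 - p) \<le> p" using p0 p1 by (auto simp: mult_left_le)
      have "8 * p\<^sup>2 * (p * (1 - p)) * (\<Sum>i<n. (\<Sum>j<n. bb i j)\<^sup>2) \<le> 8 * p\<^sup>2 * p * (4 * N\<^sup>2 * lam)"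
        using pq sum_s_sq by (intro mult_mono mult_left_mono) (auto intro: sum_nonneg)
      also have "\<dots> = 32 * p * (p * N)\<^sup>2 * lam" by (simp add: power2_eq_square)
      finally have t1: "8 * p\<^sup>2 * (p * (1 - p)) * (\<Sum>i<n. (\<Sum>j<n. bb i j)\<^sup>2) \<le> 32 * p * 4096\<^sup>2 * lam"
        using pN by simp
      have "(p * (1 - p))\<^sup>2 \<le> p\<^sup>2" using pq by (intro power_mono) auto
      moreover have "0 \<le> (\<Sum>i<n. \<Sum>j<n. (bb i j)\<^sup>2)" by (intro sum_nonneg) auto
      ultimately have t2: "4 * (p * (1 - p))\<^sup>2 * (\<Sum>i<n. \<Sum>j<n. (bb i j)\<^sup>2) \<le> 4 * p\<^sup>2 * (4 * lam\<^sup>2)"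
        using sum_bb_sq by (intro mult_mono mult_left_mono) auto
      have t3: "4 * p\<^sup>2 * (4 * lam\<^sup>2) = 16 * p\<^sup>2 * lam\<^sup>2" by simp
      show ?thesis using t1 t2 t3 unfolding EB_def by linarith
    qed
    hence "EB / (m\<^sup>2 / 4) \<le> (32 * p * 4096\<^sup>2 * lam + 16 * p\<^sup>2 * lam\<^sup>2) / (m\<^sup>2 / 4)"
      using mpos by (intro divide_right_mono) auto
    also have "\<dots> \<le> (32 * p * 4096\<^sup>2 * lam + 16 * p\<^sup>2 * lam\<^sup>2) / ((2048 * (p * lam))\<^sup>2 / 4)"
    proof (intro divide_left_mono)
      show "(2048 * (p * lam))\<^sup>2 / 4 \<le> m\<^sup>2 / 4" using m0 plam by (intro divide_right_mono power_mono) auto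
    qed (use ppos lampos plam mpos in auto)
    also have "\<dots> \<le> 1 / 8 + 1 / 65536"
    proof -
      define t where "t = p * lam"
      have t: "t \<ge> 4096" unfolding t_def by (rule plam)
      have eq: "(32 * p * 4096\<^sup>2 * lam + 16 * p\<^sup>2 * lam\<^sup>2) / ((2048 * (p * lam))\<^sup>2 / 4) = 512 / t + 1 / 65536"
        unfolding t_def using ppos lampos by (simp add: field_simps power2_eq_square)
      have "512 / t \<le> 512 / 4096" using t by (intro divide_left_mono) auto
      thus ?thesis unfolding eq by simp
    qed
    finally show ?thesis .
  qed
  finally show ?thesis by simp
qed

end


lemma outputs_carrier:
  assumes "u \<in> algE_outputs A T"
  shows "u \<in> carrier_vec (dim_row A)"
proof -
  define S where "S = sel_mat (dim_row A) T"
  have dS: "dim_row (A * S) = dim_row A" by simp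
  show ?thesis
  proof (cases "transpose_mat S * A * S = 0\<^sub>m (card T) (card T)")
    case True
    thus ?thesis using assms unfolding algE_outputs_def Let_def S_def[symmetric] by simp
  next
    case False
    then obtain x where "u = (1 / vnorm (A * S *\<^sub>v x)) \<cdot>\<^sub>v (A * S *\<^sub>v x)"
      using assms unfolding algE_outputs_def Let_def S_def[symmetric] by (simp only: if_False) blast
    thus ?thesis unfolding carrier_vec_def by simp
  qed
qed

lemma bernoulli_one: "bernoulli_pmf 1 = return_pmf True"
  by (rule pmf_eqI) (case_tac i, auto)

lemma mv_scale: "mv n a (\<lambda>j. c * x j) i = c * mv n a x i"
  unfolding mv_def by (simp add: sum_distrib_left algebra_simps)

lemma main_fixed:
  fixes A :: "real Matrix.mat" and \<epsilon> :: real and n :: nat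
  assumes eps: "0 < \<epsilon>" "\<epsilon> < 1" and A: "A \<in> carrier_mat n n" and sy: "transpose_mat A = A"
    and ps: "psd_mat A" and ab: "\<forall>i < n. \<forall>j < n. \<bar>A $$ (i, j)\<bar> \<le> 1"
  shows "measure_pmf.prob (sample_set n (min 1 (4096 / (\<epsilon> * real n))))
       {T. \<forall>u \<in> algE_outputs A T. scalar_prod u (A *\<^sub>v u) \<ge> lambda1 A - \<epsilon> * real n} \<ge> 3 / 4"
proof -
  define p where "p = min 1 (4096 / (\<epsilon> * real n))"
  have p0: "0 \<le> p" "p \<le> 1" unfolding p_def using eps by auto
  interpret bs: bsamp n p using p0 by unfold_locales
  define good where "good T = (\<forall>u \<in> algE_outputs A T. scalar_prod u (A *\<^sub>v u) \<ge> lambda1 A - \<epsilon> * real n)" for T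
  define Tf where "Tf f = {i. i < n \<and> f i}" for f :: "nat \<Rightarrow> bool"
  have Tfsub: "Tf f \<subseteq> {..<n}" for f unfolding Tf_def by auto
  have samp: "sample_set n p = map_pmf Tf bs.P" unfolding sample_set_def bs.P_def Tf_def ..
  have red: "measure_pmf.prob (sample_set n p) {T. good T} = measure_pmf.prob bs.P {f. good (Tf f)}"
    unfolding samp by simp
  have dA: "dim_row A = n" using A by simp
  have all_good: "measure_pmf.prob bs.P {f. good (Tf f)} \<ge> 3 / 4" if "\<And>f. good (Tf f)"
    using that by (simp add: measure_pmf.prob_space)
  show ?thesis
  proof (cases "n = 0")
    case True
    have "good (Tf f)" for f
    proof -
      have T0: "Tf f = {}" unfolding Tf_def using True by simp
      have "algE_outputs A {} = {}"
      proof -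
        have B0: "transpose_mat (sel_mat n {}) * A * sel_mat n {} = 0\<^sub>m 0 0"
          by (rule eq_matI) (auto simp: sel_mat_def)
        have "vnorm u \<noteq> 1" if "u \<in> carrier_vec 0" for u
          using that by (simp add: vnorm_def scalar_prod_def)
        have "algE_outputs A {} = {u. u \<in> carrier_vec n \<and> vnorm u = 1}"
          unfolding algE_outputs_def Let_def dA card.empty B0 by (simp only: simp_thms if_True)
        thus ?thesis using \<open>\<And>u. u \<in> carrier_vec 0 \<Longrightarrow> vnorm u \<noteq> 1\<close> True by blast
      qed
      thus ?thesis unfolding good_def T0 by simp
    qed
    thus ?thesis using all_good red unfolding p_def good_def by simp
  next
    case False
    hence n: "n > 0" by simp
    define a where "a = am A"
    have sa: "symm n a" unfolding a_def by (rule symm_of[OF A sy])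
    have pa: "psd n a" unfolding a_def by (rule psd_of[OF A ps])
    from spectral[OF A sy n] have eig: "eigenvalue A (lambda1 A)" and
      ub: "\<And>x. bil n a x x \<le> lambda1 A * (\<Sum>i<n. (x i)\<^sup>2)" unfolding a_def by auto
    define lam where "lam = lambda1 A"
    from eig obtain w where w: "w \<in> carrier_vec n" "w \<noteq> 0\<^sub>v n" "A *\<^sub>v w = lam \<cdot>\<^sub>v w"
      unfolding eigenvalue_def eigenvector_def lam_def using A by auto
    define s where "s = (\<Sum>i<n. (w $ i)\<^sup>2)"
    have spos: "s > 0"
    proof -
      have "s \<noteq> 0"
      proof
        assume "s = 0"
        hence "\<forall>i\<in>{..<n}. (w $ i)\<^sup>2 = 0" unfolding s_def by (subst sum_nonneg_eq_0_iff[symmetric]) auto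
        hence "w = 0\<^sub>v n" using w(1) by (intro eq_vecI) auto
        thus False using w(2) by simp
      qed
      moreover have "s \<ge> 0" unfolding s_def by (intro sum_nonneg) auto
      ultimately show ?thesis by simp
    qed
    define v where "v i = w $ i / sqrt s" for i
    have vn: "(\<Sum>i<n. (v i)\<^sup>2) = 1"
    proof -
      have "(\<Sum>i<n. (v i)\<^sup>2) = (\<Sum>i<n. (w $ i)\<^sup>2) / s" unfolding v_def using spos
        by (simp add: power_divide sum_divide_distrib)
      thus ?thesis using spos unfolding s_def by simp
    qed
    have ev: "mv n a v i = lam * v i" if i: "i < n" for i
    proof -
      have "mv n a v i = (1 / sqrt s) * mv n a (($) w) i"
        unfolding v_def using mv_scale[of n a "1 / sqrt s" "($) w" i] by (simp add: field_simps)
      also have "mv n a (($) w) i = (A *\<^sub>v w) $ i" unfolding a_def by (rule mult_vec_idx[OF A w(1) i, symmetric])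
      also have "\<dots> = lam * w $ i" using w(3) i w(1) by simp
      finally show ?thesis unfolding v_def by simp
    qed
    have lam0: "lam \<ge> 0"
    proof -
      have "bil n a v v = (\<Sum>i<n. v i * (lam * v i))" unfolding bil_mv by (intro sum.cong refl) (simp add: ev)
      also have "\<dots> = lam" using vn by (simp add: sum_distrib_left[symmetric] power2_eq_square algebra_simps)
      moreover have "0 \<le> bil n a v v" using pa unfolding psd_def by blast
      ultimately show ?thesis by linarith
    qed
    show ?thesis
    proof (cases "lam \<le> \<epsilon> * real n")
      case True
      have "good (Tf f)" for f unfolding good_def
      proof
        fix u assume u: "u \<in> algE_outputs A (Tf f)"
        have "u \<in> carrier_vec n" using outputs_carrier[OF u] dA by simp
        hence "scalar_prod u (A *\<^sub>v u) \<ge> 0" using ps dA unfolding psd_mat_def by auto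
        thus "scalar_prod u (A *\<^sub>v u) \<ge> lambda1 A - \<epsilon> * real n" using True unfolding lam_def by simp
      qed
      thus ?thesis using all_good red unfolding p_def good_def by simp
    next
      case False
      hence lamN: "lam > \<epsilon> * real n" by simp
      define N where "N = \<epsilon> * real n"
      have Npos: "N > 0" unfolding N_def using eps n by simp
      have lampos: "lam > 0" using lamN Npos unfolding N_def by simp
      have goodQ: "good (Tf f)" if hyp: "(\<Sum>i<n. (mv n a (\<lambda>i. indf f i * v i) i)\<^sup>2) >
           (lam - N) * bil n a (\<lambda>i. indf f i * v i) (\<lambda>i. indf f i * v i)" for f
      proof -
        define y where "y = (\<lambda>i. indf f i * v i)"
        define yv where "yv = Matrix.vec n (\<lambda>i. if i \<in> Tf f then v i else 0)"
        have yvc: "yv \<in> carrier_vec n" unfolding yv_def by simp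
        have yy: "yv $ i = y i" if "i < n" for i unfolding yv_def y_def Tf_def indf_def using that by simp
        have e1: "scalar_prod yv (A *\<^sub>v yv) = bil n a y y"
          unfolding sp_bil[OF A yvc yvc] a_def by (rule bil_cong) (auto simp: yy)
        have e2: "scalar_prod (A *\<^sub>v yv) (A *\<^sub>v yv) = (\<Sum>i<n. (mv n a y i)\<^sup>2)"
        proof -
          have "scalar_prod (A *\<^sub>v yv) (A *\<^sub>v yv) = (\<Sum>i<n. (A *\<^sub>v yv) $ i * (A *\<^sub>v yv) $ i)"
            using A yvc by (simp add: sp_sum[of _ n])
          also have "\<dots> = (\<Sum>i<n. (mv n a y i)\<^sup>2)"
          proof (intro sum.cong refl)
            fix i assume i: "i \<in> {..<n}"
            have i': "i < n" using i by simp
            have "(A *\<^sub>v yv) $ i = mv n a (($) yv) i" unfolding a_def by (rule mult_vec_idx[OF A yvc i'])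
            also have "\<dots> = mv n a y i" by (rule mv_cong) (simp add: yy)
            finally have "(A *\<^sub>v yv) $ i = mv n a y i" .
            thus "(A *\<^sub>v yv) $ i * (A *\<^sub>v yv) $ i = (mv n a y i)\<^sup>2" by (simp add: power2_eq_square)
          qed
          finally show ?thesis .
        qed
        show ?thesis unfolding good_def
        proof
          fix u assume u: "u \<in> algE_outputs A (Tf f)"
          have "scalar_prod u (A *\<^sub>v u) \<ge> lam - N"
            by (rule outputs_good[OF A sy ps Tfsub _ _ yv_def u]) (use lamN hyp e1 e2 in \<open>auto simp: N_def y_def\<close>)
          thus "scalar_prod u (A *\<^sub>v u) \<ge> lambda1 A - \<epsilon> * real n" unfolding lam_def N_def .
        qed
      qed
      show ?thesis
      proof (cases "p = 1")
        case True
        have P1: "bs.P = return_pmf (\<lambda>i. i < n)" unfolding bs.P_def by (simp add: True bernoulli_one)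
        have "good (Tf (\<lambda>i. i < n))"
        proof (rule goodQ)
          have yv: "(\<lambda>i. indf (\<lambda>i. i < n) i * v i) = (\<lambda>i. if i < n then v i else 0)"
            by (auto simp: indf_def)
          have b: "bil n a (\<lambda>i. if i < n then v i else 0) (\<lambda>i. if i < n then v i else 0) = lam"
          proof -
            have "bil n a (\<lambda>i. if i < n then v i else 0) (\<lambda>i. if i < n then v i else 0) = bil n a v v"
              by (rule bil_cong) auto
            also have "\<dots> = (\<Sum>i<n. v i * (lam * v i))" unfolding bil_mv by (intro sum.cong refl) (simp add: ev)
            also have "\<dots> = lam" using vn by (simp add: sum_distrib_left[symmetric] power2_eq_square algebra_simps)
            finally show ?thesis .
          qed
          have m: "(\<Sum>i<n. (mv n a (\<lambda>i. if i < n then v i else 0) i)\<^sup>2) = lam\<^sup>2"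
          proof -
            have "(\<Sum>i<n. (mv n a (\<lambda>i. if i < n then v i else 0) i)\<^sup>2) = (\<Sum>i<n. (lam * v i)\<^sup>2)"
            proof (intro sum.cong refl)
              fix i assume i: "i \<in> {..<n}"
              have "mv n a (\<lambda>i. if i < n then v i else 0) i = mv n a v i" by (rule mv_cong) simp
              also have "\<dots> = lam * v i" using i by (simp add: ev)
              finally show "(mv n a (\<lambda>i. if i < n then v i else 0) i)\<^sup>2 = (lam * v i)\<^sup>2" by simp
            qed
            also have "\<dots> = lam\<^sup>2" using vn by (simp add: power_mult_distrib sum_distrib_left[symmetric])
            finally show ?thesis .
          qed
          have "(lam - N) * lam < lam\<^sup>2" using Npos lampos by (simp add: power2_eq_square algebra_simps)
          thus "(\<Sum>i<n. (mv n a (\<lambda>i. indf (\<lambda>i. i < n) i * v i) i)\<^sup>2) >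
           (lam - N) * bil n a (\<lambda>i. indf (\<lambda>i. i < n) i * v i) (\<lambda>i. indf (\<lambda>i. i < n) i * v i)"
            unfolding yv b m .
        qed
        hence "measure_pmf.prob bs.P {f. good (Tf f)} = 1" unfolding P1 by simp
        thus ?thesis using red unfolding p_def good_def by simp
      next
        case False
        hence p1: "p < 1" using p0 by simp
        hence pdef: "p = 4096 / N" unfolding p_def N_def by (auto simp: min_def split: if_splits)
        have pN: "p * N = 4096" unfolding pdef using Npos by simp
        have N1: "N \<ge> 1"
        proof -
          have "4096 / N < 1" using p1 pdef by simp
          thus ?thesis using Npos by (simp add: field_simps)
        qed
        interpret cp: coreprob n a lam v N p
        proof unfold_locales
          show "\<And>i j. i < n \<Longrightarrow> j < n \<Longrightarrow> \<bar>a i j\<bar> \<le> 1" using ab unfolding a_def am_def by auto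
        qed (use sa pa lampos ub ev vn N1 lamN pN p0 in \<open>auto simp: N_def lam_def\<close>)
        have bad: "measure_pmf.prob bs.P {f. \<not> ((\<Sum>i<n. (mv n a (\<lambda>i. indf f i * v i) i)\<^sup>2) >
           cp.mu0 * bil n a (\<lambda>i. indf f i * v i) (\<lambda>i. indf f i * v i))} \<le> 1 / 4"
          by (rule cp.bad_prob)
        define Bad where "Bad = {f. \<not> ((\<Sum>i<n. (mv n a (\<lambda>i. indf f i * v i) i)\<^sup>2) >
           cp.mu0 * bil n a (\<lambda>i. indf f i * v i) (\<lambda>i. indf f i * v i))}"
        have "1 - measure_pmf.prob bs.P Bad = measure_pmf.prob bs.P (UNIV - Bad)"
          using measure_pmf.prob_compl[of Bad bs.P] by simp
        also have "\<dots> \<le> measure_pmf.prob bs.P {f. good (Tf f)}"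
          by (rule measure_pmf.finite_measure_mono) (use goodQ in \<open>auto simp: cp.mu0_def Bad_def\<close>)
        finally have "measure_pmf.prob bs.P {f. good (Tf f)} \<ge> 3 / 4" using bad unfolding Bad_def[symmetric] by simp
        thus ?thesis using red unfolding p_def good_def by simp
      qed
    qed
  qed
qed

theorem mainTheorem4:
  shows "\<exists>c::real > 0. \<forall>(n::nat) (\<epsilon>::real) (A::real Matrix.mat).
     0 < \<epsilon> \<and> \<epsilon> < 1 \<and> A \<in> carrier_mat n n \<and> transpose_mat A = A \<and> psd_mat A \<and>
     (\<forall>i < n. \<forall>j < n. \<bar>A $$ (i, j)\<bar> \<le> 1) \<longrightarrow>
     measure_pmf.prob (sample_set n (min 1 (c / (\<epsilon> * real n))))
       {T. \<forall>u \<in> algE_outputs A T. scalar_prod u (A *\<^sub>v u) \<ge> lambda1 A - \<epsilon> * real n} \<ge> 3 / 4"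
proof (rule exI[of _ 4096], intro conjI allI impI)
  show "(4096::real) > 0" by simp
  fix n :: nat and \<epsilon> :: real and A :: "real Matrix.mat"
  assume H: "0 < \<epsilon> \<and> \<epsilon> < 1 \<and> A \<in> carrier_mat n n \<and> transpose_mat A = A \<and> psd_mat A \<and>
     (\<forall>i < n. \<forall>j < n. \<bar>A $$ (i, j)\<bar> \<le> 1)"
  show "measure_pmf.prob (sample_set n (min 1 (4096 / (\<epsilon> * real n))))
       {T. \<forall>u \<in> algE_outputs A T. scalar_prod u (A *\<^sub>v u) \<ge> lambda1 A - \<epsilon> * real n} \<ge> 3 / 4"
    using H by (intro main_fixed) auto
qed

end
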